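(* Consider the operator splitting scheme described in the context for the reaction-diffusion system with one reversible reaction. Given $c^n$ with $c^n_{i,j,k}\in\mathbb{R}^N_+$ (all components positive) for all $0\le i,j,k\le N_0-1$, with periodic boundary conditions, the scheme has a unique solution $c^{n+1}$, and $c^{n+1}_{i,j,k}\in\mathbb{R}^N_+$ for all $0\le i,j,k\le N_0-1$. Moreover $\mathcal{F}_h(c^{n+1})\le\mathcal{F}_h(c^n)$, and hence $\mathcal{F}_h(c^n)\le\mathcal{F}_h(c^0)$ for all $n$.
   Context: Species $X_1,\dots,X_N$ undergo one reaction with stoichiometric vector $\sigma=(-\alpha_1,\dots,-\alpha_r,\beta_{r+1},\dots,\beta_N)^{\rm T}$, $1\le r<N$, $\alpha_i,\beta_i>0$; $U_1,\dots,U_N\in\mathbb{R}$, $k_1^->0$. Periodic grid on $(0,1)^3$, $h=1/N_0$, $\langle f,g\rangle=h^3\sum_{i,j,k}f_{i,j,k}g_{i,j,k}$, and $\mathcal{F}_h(c)=\langle\sum_{i=1}^N(c_i(\ln c_i-1)+c_iU_i),\mathbf 1\rangle$. Reaction scheme with step $\tau$ at a single grid point, starting from $c^0>0$: with $c(R)=c^0+\sigma R$, $F(R)=\sum_i[c_i(R)(\ln c_i(R)-1)+c_i(R)U_i]$, $\mu_i(R)=\ln c_i(R)+U_i$, $\eta(c)=k_1^-\prod_{i>r}c_i^{\beta_i}$, $\phi(p,q)=\frac{F(p)-F(q)}{p-q}$ ($p\ne q$), $\phi(p,p)=F'(p)$: first compute the predictor $\widehat R$ with $c(\widehat R)>0$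 solving $\ln\big(\frac{\widehat R}{\eta(c^0)\tau}+1\big)=-\sum_i\sigma_i\mu_i(\widehat R)$; with $\hat\eta=\eta(c(\widehat R/2))$, find $R$ with $c(R)>0$, $R+\hat\eta\tau>0$ and $\ln\big(\frac{R}{\hat\eta\tau}+1\big)=-\phi(R,0)-\tau\sum_i\sigma_i(\mu_i(R)-\mu_i(0))$; output $c^0+\sigma R$. Diffusion schemes with step $\tau$ for each species separately ($\partial_t c_i=\nabla\cdot(D_i(c_i)\nabla c_i)$, $D_i>0$): if $D_i$ is a constant, $c_i\mapsto e^{D_i\tau\Delta_h}c_i$ with $\Delta_h$ the periodic 7-point discrete Laplacian; otherwise, from $\rho^n=c_i$, compute the positive solution $\hat\rho$ of $\frac{\hat\rho-\rho^n}{\tau}=\nabla_h\cdot(\mathcal{A}_h[D_i(\rho^n)]\nabla_h\hat\rho)$, set $\hat\rho^{1/2}=\frac12(\rho^n+\hat\rho)$, $\mathcal{M}=\mathcal{A}_h(D_i(\hat\rho^{1/2})\hat\rho^{1/2})$, and find positive $\rho^{n+1}$ with $\frac{\rho^{n+1}-\rho^n}{\tau}=\nabla_h\cdot(\mathcal{M}\nabla_h\mu)$, $\mu=Q(\rho^{n+1},\rho^n)+\tau(\ln\rho^{n+1}-\ln\rho^n)$, where $Q(p,q)=\frac{F_i(p)-F_i(q)}{p-q}$ ($p\neq q$), $Q(p,p)=F_i'(p)$, $F_i(\rho)=\rho(\ln\rho-1)+U_i\rho$; here $\nabla_h$ is the forward difference to staggered points, $\nabla_h\cdot$ the backward-difference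 divergence, $\mathcal{A}_h$ the two-point average to staggered points. Splitting step ($\Delta t>0$): Stage 1: apply the reaction scheme with $\tau=\Delta t/2$ at every grid point to $c^n$, giving $c^{n+1,(1)}$. Stage 2: apply the diffusion scheme with $\tau=\Delta t$ to each species of $c^{n+1,(1)}$, giving $c^{n+1,(2)}$. Stage 3: apply the reaction scheme with $\tau=\Delta t/2$ at every grid point to $c^{n+1,(2)}$, giving $c^{n+1}$. *)

theory Defs
  imports "HOL-Analysis.Analysis"
begin

type_synonym gpt = "nat \<times> nat \<times> nat"

section \<open>Reaction part (single grid point); species are indexed 1..N\<close>

definition sig :: "nat \<Rightarrow> (nat \<Rightarrow> real) \<Rightarrow> (nat \<Rightarrow> real) \<Rightarrow> nat \<Rightarrow> real" where
  "sig r \<alpha> \<beta> i = (if i \<le> r then - \<alpha> i else \<beta> i)"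

definition cR :: "nat \<Rightarrow> (nat \<Rightarrow> real) \<Rightarrow> (nat \<Rightarrow> real) \<Rightarrow> (nat \<Rightarrow> real) \<Rightarrow> real \<Rightarrow> nat \<Rightarrow> real" where
  "cR r \<alpha> \<beta> c0 R i = c0 i + sig r \<alpha> \<beta> i * R"

definition FR :: "nat \<Rightarrow> nat \<Rightarrow> (nat \<Rightarrow> real) \<Rightarrow> (nat \<Rightarrow> real) \<Rightarrow> (nat \<Rightarrow> real)
    \<Rightarrow> (nat \<Rightarrow> real) \<Rightarrow> real \<Rightarrow> real" where
  "FR N r \<alpha> \<beta> U c0 R =
     (\<Sum>i=1..N. cR r \<alpha> \<beta> c0 R i * (ln (cR r \<alpha> \<beta> c0 R i) - 1) + cR r \<alpha> \<beta> c0 R i * U i)"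

definition muR :: "nat \<Rightarrow> (nat \<Rightarrow> real) \<Rightarrow> (nat \<Rightarrow> real) \<Rightarrow> (nat \<Rightarrow> real)
    \<Rightarrow> (nat \<Rightarrow> real) \<Rightarrow> real \<Rightarrow> nat \<Rightarrow> real" where
  "muR r \<alpha> \<beta> U c0 R i = ln (cR r \<alpha> \<beta> c0 R i) + U i"

definition eta :: "nat \<Rightarrow> nat \<Rightarrow> (nat \<Rightarrow> real) \<Rightarrow> real \<Rightarrow> (nat \<Rightarrow> real) \<Rightarrow> real" where
  "eta N r \<beta> k1m c = k1m * (\<Prod>i\<in>{r+1..N}. c i powr \<beta> i)"

definition phiR :: "nat \<Rightarrow> nat \<Rightarrow> (nat \<Rightarrow> real) \<Rightarrow> (nat \<Rightarrow> real) \<Rightarrow> (nat \<Rightarrow> real)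
    \<Rightarrow> (nat \<Rightarrow> real) \<Rightarrow> real \<Rightarrow> real \<Rightarrow> real" where
  "phiR N r \<alpha> \<beta> U c0 p q =
     (if p \<noteq> q then (FR N r \<alpha> \<beta> U c0 p - FR N r \<alpha> \<beta> U c0 q) / (p - q)
      else deriv (FR N r \<alpha> \<beta> U c0) p)"

definition posR :: "nat \<Rightarrow> nat \<Rightarrow> (nat \<Rightarrow> real) \<Rightarrow> (nat \<Rightarrow> real) \<Rightarrow> (nat \<Rightarrow> real) \<Rightarrow> real \<Rightarrow> bool" where
  "posR N r \<alpha> \<beta> c0 R \<longleftrightarrow> (\<forall>i\<in>{1..N}. cR r \<alpha> \<beta> c0 R i > 0)"

definition predictor :: "nat \<Rightarrow> nat \<Rightarrow> (nat \<Rightarrow> real) \<Rightarrow> (nat \<Rightarrow> real) \<Rightarrow> (nat \<Rightarrow> real) \<Rightarrow> real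
    \<Rightarrow> real \<Rightarrow> (nat \<Rightarrow> real) \<Rightarrow> real \<Rightarrow> bool" where
  "predictor N r \<alpha> \<beta> U k1m \<tau> c0 Rh \<longleftrightarrow>
     posR N r \<alpha> \<beta> c0 Rh \<and>
     Rh / (eta N r \<beta> k1m c0 * \<tau>) + 1 > 0 \<and>
     ln (Rh / (eta N r \<beta> k1m c0 * \<tau>) + 1) =
       - (\<Sum>i=1..N. sig r \<alpha> \<beta> i * muR r \<alpha> \<beta> U c0 Rh i)"

definition corrector :: "nat \<Rightarrow> nat \<Rightarrow> (nat \<Rightarrow> real) \<Rightarrow> (nat \<Rightarrow> real) \<Rightarrow> (nat \<Rightarrow> real) \<Rightarrow> real
    \<Rightarrow> real \<Rightarrow> (nat \<Rightarrow> real) \<Rightarrow> real \<Rightarrow> real \<Rightarrow> bool" where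
  "corrector N r \<alpha> \<beta> U k1m \<tau> c0 Rh R \<longleftrightarrow>
     (let et = eta N r \<beta> k1m (cR r \<alpha> \<beta> c0 (Rh / 2)) in
       posR N r \<alpha> \<beta> c0 R \<and> R + et * \<tau> > 0 \<and>
       ln (R / (et * \<tau>) + 1) =
         - phiR N r \<alpha> \<beta> U c0 R 0
         - \<tau> * (\<Sum>i=1..N. sig r \<alpha> \<beta> i * (muR r \<alpha> \<beta> U c0 R i - muR r \<alpha> \<beta> U c0 0 i)))"

definition reaction_step :: "nat \<Rightarrow> nat \<Rightarrow> (nat \<Rightarrow> real) \<Rightarrow> (nat \<Rightarrow> real) \<Rightarrow> (nat \<Rightarrow> real) \<Rightarrow> real
    \<Rightarrow> real \<Rightarrow> (nat \<Rightarrow> real) \<Rightarrow> (nat \<Rightarrow> real) \<Rightarrow> bool" where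
  "reaction_step N r \<alpha> \<beta> U k1m \<tau> c0 c1 \<longleftrightarrow>
     (\<exists>Rh R. predictor N r \<alpha> \<beta> U k1m \<tau> c0 Rh \<and> corrector N r \<alpha> \<beta> U k1m \<tau> c0 Rh R \<and>
            (\<forall>i\<in>{1..N}. c1 i = c0 i + sig r \<alpha> \<beta> i * R))"

definition grid :: "nat \<Rightarrow> gpt set" where
  "grid N0 = {0..<N0} \<times> {0..<N0} \<times> {0..<N0}"

definition shp :: "nat \<Rightarrow> nat \<Rightarrow> gpt \<Rightarrow> gpt" where
  "shp N0 d p = (case p of (i, j, k) \<Rightarrow>
     if d = 0 then ((i + 1) mod N0, j, k)
     else if d = 1 then (i, (j + 1) mod N0, k)
     else (i, j, (k + 1) mod N0))"

definition shm :: "nat \<Rightarrow> nat \<Rightarrow> gpt \<Rightarrow> gpt" where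
  "shm N0 d p = (case p of (i, j, k) \<Rightarrow>
     if d = 0 then ((i + N0 - 1) mod N0, j, k)
     else if d = 1 then (i, (j + N0 - 1) mod N0, k)
     else (i, j, (k + N0 - 1) mod N0))"

text \<open>Two-point average to the staggered point p + e_d/2 (stored at index (d,p)).\<close>
definition avgh :: "nat \<Rightarrow> (gpt \<Rightarrow> real) \<Rightarrow> nat \<Rightarrow> gpt \<Rightarrow> real" where
  "avgh N0 w d p = (w p + w (shp N0 d p)) / 2"

definition gradh :: "nat \<Rightarrow> (gpt \<Rightarrow> real) \<Rightarrow> nat \<Rightarrow> gpt \<Rightarrow> real" where
  "gradh N0 u d p = (u (shp N0 d p) - u p) / (1 / real N0)"

definition divh :: "nat \<Rightarrow> (nat \<Rightarrow> gpt \<Rightarrow> real) \<Rightarrow> gpt \<Rightarrow> real" where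
  "divh N0 W p = (\<Sum>d<3. (W d p - W d (shm N0 d p)) / (1 / real N0))"

definition divMgrad :: "nat \<Rightarrow> (nat \<Rightarrow> gpt \<Rightarrow> real) \<Rightarrow> (gpt \<Rightarrow> real) \<Rightarrow> gpt \<Rightarrow> real" where
  "divMgrad N0 M u = divh N0 (\<lambda>d q. M d q * gradh N0 u d q)"

definition laph :: "nat \<Rightarrow> (gpt \<Rightarrow> real) \<Rightarrow> gpt \<Rightarrow> real" where
  "laph N0 u = divMgrad N0 (\<lambda>d q. 1) u"

definition heat_exp :: "nat \<Rightarrow> real \<Rightarrow> (gpt \<Rightarrow> real) \<Rightarrow> gpt \<Rightarrow> real" where
  "heat_exp N0 t u p = (\<Sum>m. t ^ m / fact m * ((laph N0 ^^ m) u) p)"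

definition Fi :: "real \<Rightarrow> real \<Rightarrow> real" where
  "Fi Ui \<rho> = \<rho> * (ln \<rho> - 1) + Ui * \<rho>"

definition Qi :: "real \<Rightarrow> real \<Rightarrow> real \<Rightarrow> real" where
  "Qi Ui p q = (if p \<noteq> q then (Fi Ui p - Fi Ui q) / (p - q) else deriv (Fi Ui) p)"

definition diff_const :: "(real \<Rightarrow> real) \<Rightarrow> bool" where
  "diff_const Di \<longleftrightarrow> (\<exists>d. \<forall>\<rho>>0. Di \<rho> = d)"

definition diffusion_nl :: "nat \<Rightarrow> (real \<Rightarrow> real) \<Rightarrow> real \<Rightarrow> real
     \<Rightarrow> (gpt \<Rightarrow> real) \<Rightarrow> (gpt \<Rightarrow> real) \<Rightarrow> bool" where
  "diffusion_nl N0 Di Ui \<tau> \<rho>n \<rho>1 \<longleftrightarrow>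
     (\<exists>\<rho>h. (\<forall>p\<in>grid N0. \<rho>h p > 0) \<and>
        (\<forall>p\<in>grid N0. (\<rho>h p - \<rho>n p) / \<tau> =
             divMgrad N0 (avgh N0 (\<lambda>q. Di (\<rho>n q))) \<rho>h p) \<and>
        (let \<rho>half = (\<lambda>q. (\<rho>n q + \<rho>h q) / 2);
             M = avgh N0 (\<lambda>q. Di (\<rho>half q) * \<rho>half q)
         in (\<forall>p\<in>grid N0. \<rho>1 p > 0) \<and>
            (\<forall>p\<in>grid N0. (\<rho>1 p - \<rho>n p) / \<tau> =
               divMgrad N0 M (\<lambda>q. Qi Ui (\<rho>1 q) (\<rho>n q) + \<tau> * (ln (\<rho>1 q) - ln (\<rho>n q))) p)))"

definition diffusion_step :: "nat \<Rightarrow> (real \<Rightarrow> real) \<Rightarrow> real \<Rightarrow> real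
     \<Rightarrow> (gpt \<Rightarrow> real) \<Rightarrow> (gpt \<Rightarrow> real) \<Rightarrow> bool" where
  "diffusion_step N0 Di Ui \<tau> \<rho>n \<rho>1 \<longleftrightarrow>
     (if diff_const Di
      then (\<forall>p\<in>grid N0. \<rho>1 p = heat_exp N0 (Di 1 * \<tau>) \<rho>n p)
      else diffusion_nl N0 Di Ui \<tau> \<rho>n \<rho>1)"

definition supported :: "nat \<Rightarrow> nat \<Rightarrow> (nat \<Rightarrow> gpt \<Rightarrow> real) \<Rightarrow> bool" where
  "supported N N0 c \<longleftrightarrow> (\<forall>i p. (i \<notin> {1..N} \<or> p \<notin> grid N0) \<longrightarrow> c i p = 0)"

definition positive_state :: "nat \<Rightarrow> nat \<Rightarrow> (nat \<Rightarrow> gpt \<Rightarrow> real) \<Rightarrow> bool" where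
  "positive_state N N0 c \<longleftrightarrow> (\<forall>i\<in>{1..N}. \<forall>p\<in>grid N0. c i p > 0)"

definition energy_h :: "nat \<Rightarrow> nat \<Rightarrow> (nat \<Rightarrow> real) \<Rightarrow> (nat \<Rightarrow> gpt \<Rightarrow> real) \<Rightarrow> real" where
  "energy_h N N0 U c = (1 / real N0) ^ 3 *
     (\<Sum>p\<in>grid N0. \<Sum>i=1..N. c i p * (ln (c i p) - 1) + c i p * U i)"

definition splitting_step :: "nat \<Rightarrow> nat \<Rightarrow> (nat \<Rightarrow> real) \<Rightarrow> (nat \<Rightarrow> real) \<Rightarrow> (nat \<Rightarrow> real)
    \<Rightarrow> real \<Rightarrow> (nat \<Rightarrow> real \<Rightarrow> real) \<Rightarrow> nat \<Rightarrow> real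
    \<Rightarrow> (nat \<Rightarrow> gpt \<Rightarrow> real) \<Rightarrow> (nat \<Rightarrow> gpt \<Rightarrow> real) \<Rightarrow> bool" where
  "splitting_step N r \<alpha> \<beta> U k1m D N0 \<Delta>t cn cn1 \<longleftrightarrow>
     supported N N0 cn1 \<and>
     (\<exists>c1 c2.
        (\<forall>p\<in>grid N0. reaction_step N r \<alpha> \<beta> U k1m (\<Delta>t / 2) (\<lambda>i. cn i p) (\<lambda>i. c1 i p)) \<and>
        (\<forall>i\<in>{1..N}. diffusion_step N0 (D i) (U i) \<Delta>t (c1 i) (c2 i)) \<and>
        (\<forall>p\<in>grid N0. reaction_step N r \<alpha> \<beta> U k1m (\<Delta>t / 2) (\<lambda>i. c2 i p) (\<lambda>i. cn1 i p)))"

end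

theory Submission
  imports Defs
begin


lemma shp_grid: "p \<in> grid N0 \<Longrightarrow> shp N0 d p \<in> grid N0"
  by (cases p) (auto simp: grid_def shp_def)

lemma shm_grid: "p \<in> grid N0 \<Longrightarrow> shm N0 d p \<in> grid N0"
  by (cases p) (auto simp: grid_def shm_def)

lemma modlem1: "(i::nat) < n \<Longrightarrow> Suc ((i + n - Suc 0) mod n) mod n = i"
proof (cases i)
  case 0
  assume "i < n"
  then show ?thesis using 0 by (cases n) auto
next
  case (Suc j)
  assume "i < n"
  then have "i + n - Suc 0 = j + n" using Suc by simp
  then have "(i + n - Suc 0) mod n = j" using Suc \<open>i<n\<close> by simp
  then show ?thesis using Suc \<open>i<n\<close> by simp
qed

lemma modlem2: "(i::nat) < n \<Longrightarrow> (Suc i mod n + n - Suc 0) mod n = i"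
proof (cases "Suc i = n")
  case True
  assume "i < n"
  then show ?thesis using True by simp
next
  case False
  assume "i < n"
  then have "Suc i mod n = Suc i" using False by simp
  then show ?thesis using \<open>i<n\<close> by simp
qed

lemma shp_shm: "p \<in> grid N0 \<Longrightarrow> shp N0 d (shm N0 d p) = p"
  by (cases p) (auto simp: grid_def shm_def shp_def modlem1)

lemma shm_shp: "p \<in> grid N0 \<Longrightarrow> shm N0 d (shp N0 d p) = p"
  by (cases p) (auto simp: grid_def shm_def shp_def modlem2)

lemma bij_shm: "bij_betw (shm N0 d) (grid N0) (grid N0)"
  by (rule bij_betw_byWitness[where f'="shp N0 d"]) (auto simp: shp_shm shm_shp shp_grid shm_grid)

lemma bij_shp: "bij_betw (shp N0 d) (grid N0) (grid N0)"
  by (rule bij_betw_byWitness[where f'="shm N0 d"]) (auto simp: shp_shm shm_shp shp_grid shm_grid)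

lemma sum_shm: "(\<Sum>p\<in>grid N0. f (shm N0 d p)) = (\<Sum>p\<in>grid N0. f p)"
  using sum.reindex_bij_betw[OF bij_shm] by blast

lemma sum_shp: "(\<Sum>p\<in>grid N0. f (shp N0 d p)) = (\<Sum>p\<in>grid N0. f p)"
  using sum.reindex_bij_betw[OF bij_shp] by blast

lemma finite_grid[simp]: "finite (grid N0)"
  by (simp add: grid_def)

lemma divh_sbp:
  "(\<Sum>p\<in>grid N0. v p * divh N0 W p) = - (\<Sum>p\<in>grid N0. \<Sum>d<3. W d p * gradh N0 v d p)"
proof -
  have "(\<Sum>p\<in>grid N0. v p * divh N0 W p) =
     (\<Sum>d<3. real N0 * ((\<Sum>p\<in>grid N0. v p * W d p) - (\<Sum>p\<in>grid N0. v p * W d (shm N0 d p))))"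
    unfolding divh_def by (simp add: sum_distrib_left sum_distrib_right sum_subtractf algebra_simps sum.swap[of _ "grid N0"])
  also have "\<dots> = (\<Sum>d<3. real N0 * ((\<Sum>p\<in>grid N0. v p * W d p) - (\<Sum>p\<in>grid N0. v (shp N0 d p) * W d p)))"
  proof (rule sum.cong[OF refl])
    fix d
    have "(\<Sum>p\<in>grid N0. v p * W d (shm N0 d p)) = (\<Sum>p\<in>grid N0. v (shp N0 d (shm N0 d p)) * W d (shm N0 d p))"
      by (rule sum.cong) (auto simp: shp_shm)
    also have "\<dots> = (\<Sum>p\<in>grid N0. v (shp N0 d p) * W d p)"
      by (rule sum_shm)
    finally show "real N0 * ((\<Sum>p\<in>grid N0. v p * W d p) - (\<Sum>p\<in>grid N0. v p * W d (shm N0 d p))) =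
         real N0 * ((\<Sum>p\<in>grid N0. v p * W d p) - (\<Sum>p\<in>grid N0. v (shp N0 d p) * W d p))" by simp
  qed
  also have "\<dots> = - (\<Sum>p\<in>grid N0. \<Sum>d<3. W d p * gradh N0 v d p)"
    unfolding gradh_def by (simp add: sum_distrib_left sum_subtractf algebra_simps sum.swap[of _ "grid N0"] sum_negf)
  finally show ?thesis .
qed

lemma divMgrad_sbp:
  "(\<Sum>p\<in>grid N0. v p * divMgrad N0 M u p) = - (\<Sum>p\<in>grid N0. \<Sum>d<3. M d p * gradh N0 u d p * gradh N0 v d p)"
  unfolding divMgrad_def by (simp add: divh_sbp)

lemma divMgrad_sum0: "(\<Sum>p\<in>grid N0. divMgrad N0 M u p) = 0"
  using divMgrad_sbp[where v="\<lambda>_. 1" and M=M and u=u] by (simp add: gradh_def)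

lemma divMgrad_expand: "p \<in> grid N0 \<Longrightarrow> divMgrad N0 M u p =
   (\<Sum>d<3. real N0 * real N0 * (M d p * (u (shp N0 d p) - u p) - M d (shm N0 d p) * (u p - u (shm N0 d p))))"
  unfolding divMgrad_def divh_def gradh_def by (simp add: shp_shm algebra_simps)

lemma divMgrad_cong: "p \<in> grid N0 \<Longrightarrow> (\<And>d q. q \<in> grid N0 \<Longrightarrow> M d q = M' d q) \<Longrightarrow>
   (\<And>q. q \<in> grid N0 \<Longrightarrow> u q = u' q) \<Longrightarrow> divMgrad N0 M u p = divMgrad N0 M' u' p"
  by (simp add: divMgrad_expand shp_grid shm_grid)



lemma divMgrad_diff: "divMgrad N0 M u p - divMgrad N0 M v p = divMgrad N0 M (\<lambda>q. u q - v q) p"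
  unfolding divMgrad_def divh_def gradh_def by (simp add: sum_subtractf[symmetric] algebra_simps diff_divide_distrib)

lemma divMgrad_nonpos:
  assumes M: "\<And>d q. q \<in> grid N0 \<Longrightarrow> M d q \<ge> 0"
  shows "(\<Sum>p\<in>grid N0. u p * divMgrad N0 M u p) \<le> 0"
proof -
  have "(\<Sum>p\<in>grid N0. \<Sum>d<3. M d p * gradh N0 u d p * gradh N0 u d p) \<ge> 0"
    by (intro sum_nonneg) (simp add: M mult.assoc)
  then show ?thesis by (simp add: divMgrad_sbp)
qed

lemma sol_energy:
  assumes M: "\<And>d q. q \<in> grid N0 \<Longrightarrow> M d q \<ge> 0" and tau: "\<tau> > 0"
    and eq: "\<forall>p\<in>grid N0. (x p - b p) / \<tau> = divMgrad N0 M u p"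
  shows "(\<Sum>p\<in>grid N0. (x p - b p) * u p) \<le> 0"
proof -
  have "(\<Sum>p\<in>grid N0. (x p - b p) * u p) = \<tau> * (\<Sum>p\<in>grid N0. u p * divMgrad N0 M u p)"
    unfolding sum_distrib_left
  proof (rule sum.cong[OF refl])
    fix p assume "p \<in> grid N0"
    then have "x p - b p = \<tau> * divMgrad N0 M u p" using eq tau by (auto simp: field_simps)
    then show "(x p - b p) * u p = \<tau> * (u p * divMgrad N0 M u p)" by simp
  qed
  also have "\<dots> \<le> 0" using divMgrad_nonpos[OF M, where u=u] tau by (simp add: mult_nonneg_nonpos)
  finally show ?thesis .
qed

lemma sol_unique:
  assumes M: "\<And>d q. q \<in> grid N0 \<Longrightarrow> M d q \<ge> 0" and tau: "\<tau> > 0"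
    and phi: "\<And>p y z. p \<in> grid N0 \<Longrightarrow> 0 < y \<Longrightarrow> y < z \<Longrightarrow> \<phi> p y < \<phi> p z"
    and pos1: "\<forall>p\<in>grid N0. x p > 0" and pos2: "\<forall>p\<in>grid N0. x' p > 0"
    and eq1: "\<forall>p\<in>grid N0. (x p - b p) / \<tau> = divMgrad N0 M (\<lambda>q. \<phi> q (x q)) p"
    and eq2: "\<forall>p\<in>grid N0. (x' p - b p) / \<tau> = divMgrad N0 M (\<lambda>q. \<phi> q (x' q)) p"
  shows "\<forall>p\<in>grid N0. x p = x' p"
proof -
  define w where "w = (\<lambda>q. \<phi> q (x q) - \<phi> q (x' q))"
  have eq: "\<forall>p\<in>grid N0. (x p - x' p) / \<tau> = divMgrad N0 M w p"
  proof
    fix p assume p: "p \<in> grid N0"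
    have "(x p - x' p) / \<tau> = (x p - b p) / \<tau> - (x' p - b p) / \<tau>" by (simp add: diff_divide_distrib)
    also have "\<dots> = divMgrad N0 M w p" using eq1 eq2 p by (simp add: divMgrad_diff w_def)
    finally show "(x p - x' p) / \<tau> = divMgrad N0 M w p" .
  qed
  have s: "(\<Sum>p\<in>grid N0. (x p - x' p) * w p) \<le> 0"
    using sol_energy[OF M tau eq] .
  have nn: "\<forall>p\<in>grid N0. (x p - x' p) * w p \<ge> 0"
  proof
    fix p assume p: "p \<in> grid N0"
    show "(x p - x' p) * w p \<ge> 0"
    proof (cases "x p < x' p")
      case True
      then have "w p < 0" using phi[OF p, of "x p" "x' p"] pos1 p by (simp add: w_def)
      then show ?thesis using True by (simp add: mult_nonpos_nonpos)
    next
      case False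
      show ?thesis
      proof (cases "x p = x' p")
        case True then show ?thesis by simp
      next
        case False2: False
        then have "x' p < x p" using False by simp
        then have "w p > 0" using phi[OF p, of "x' p" "x p"] pos2 p by (simp add: w_def)
        then show ?thesis using \<open>x' p < x p\<close> by simp
      qed
    qed
  qed
  then have z: "\<forall>p\<in>grid N0. (x p - x' p) * w p = 0"
    using s sum_nonneg_eq_0_iff[of "grid N0" "\<lambda>p. (x p - x' p) * w p"] 
    by (metis (no_types, lifting) finite_grid order_antisym sum_nonneg)
  show ?thesis
  proof
    fix p assume p: "p \<in> grid N0"
    show "x p = x' p"
    proof (rule ccontr)
      assume ne: "x p \<noteq> x' p"
      then have "w p \<noteq> 0"
        using phi[OF p, of "x p" "x' p"] phi[OF p, of "x' p" "x p"] pos1 pos2 p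
        by (cases "x p < x' p") (auto simp: w_def)
      then show False using z p ne by auto
    qed
  qed
qed



definition Sg :: "nat \<Rightarrow> (nat \<Rightarrow> gpt \<Rightarrow> real) \<Rightarrow> gpt \<Rightarrow> real" where
  "Sg N0 M p = (\<Sum>d<3. M d p + M d (shm N0 d p))"
definition Rg :: "nat \<Rightarrow> (nat \<Rightarrow> gpt \<Rightarrow> real) \<Rightarrow> (gpt \<Rightarrow> real) \<Rightarrow> gpt \<Rightarrow> real" where
  "Rg N0 M u p = (\<Sum>d<3. M d p * u (shp N0 d p) + M d (shm N0 d p) * u (shm N0 d p))"

lemma divMgrad_SR: "p \<in> grid N0 \<Longrightarrow> divMgrad N0 M u p = real N0 * real N0 * (Rg N0 M u p - Sg N0 M p * u p)"
  unfolding divMgrad_expand Rg_def Sg_def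
  by (simp add: sum_distrib_left sum_distrib_right sum_subtractf[symmetric] algebra_simps)

lemma eq_reform:
  assumes "p \<in> grid N0" "\<tau> > 0"
  shows "((x p - b p) / \<tau> = divMgrad N0 M u p) \<longleftrightarrow>
     (x p + \<tau> * real N0 * real N0 * Sg N0 M p * u p = b p + \<tau> * real N0 * real N0 * Rg N0 M u p)"
  using assms by (simp add: divMgrad_SR field_simps)

lemma Rg_mono:
  assumes M: "\<And>d q. q \<in> grid N0 \<Longrightarrow> M d q \<ge> 0" and p: "p \<in> grid N0"
    and le: "\<And>q. q \<in> grid N0 \<Longrightarrow> u q \<le> v q"
  shows "Rg N0 M u p \<le> Rg N0 M v p"
  unfolding Rg_def
  by (intro sum_mono add_mono mult_left_mono le M shp_grid shm_grid p)

lemma Rg_const: "Rg N0 M (\<lambda>_. c) p = Sg N0 M p * c"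
  unfolding Rg_def Sg_def by (simp add: sum_distrib_left algebra_simps)

lemma Sg_nonneg: assumes M: "\<And>d q. q \<in> grid N0 \<Longrightarrow> M d q \<ge> 0" and p: "p \<in> grid N0" shows "Sg N0 M p \<ge> 0"
  unfolding Sg_def by (intro sum_nonneg add_nonneg_nonneg M p shm_grid)

lemma sol_exists:
  assumes M: "\<And>d q. q \<in> grid N0 \<Longrightarrow> M d q \<ge> 0" and tau: "\<tau> > 0"
    and phi: "\<And>p y z. p \<in> grid N0 \<Longrightarrow> 0 < y \<Longrightarrow> y < z \<Longrightarrow> \<phi> p y < \<phi> p z"
    and phic: "\<And>p. p \<in> grid N0 \<Longrightarrow> continuous_on {0<..} (\<phi> p)"
    and xl: "\<And>p. p \<in> grid N0 \<Longrightarrow> 0 < xl p \<and> xl p \<le> b p \<and> b p \<le> xu p \<and> \<phi> p (xl p) = ml \<and> \<phi> p (xu p) = mu"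
  shows "\<exists>x. (\<forall>p\<in>grid N0. x p > 0) \<and> (\<forall>p\<in>grid N0. (x p - b p) / \<tau> = divMgrad N0 M (\<lambda>q. \<phi> q (x q)) p)"
proof -
  define G where "G = grid N0"
  have xlu: "xl p \<le> xu p" if "p \<in> grid N0" for p using xl[OF that] by linarith
  define K where "K = \<tau> * real N0 * real N0"
  have K: "K \<ge> 0" using tau by (simp add: K_def)
  define L where "L = (\<lambda>p y. y + K * Sg N0 M p * \<phi> p y)"
  define Rh where "Rh = (\<lambda>x p. b p + K * Rg N0 M (\<lambda>q. \<phi> q (x q)) p)"
  define B where "B = (\<lambda>x. \<forall>p\<in>G. xl p \<le> x p \<and> x p \<le> xu p)"
  have phile: "\<phi> p y \<le> \<phi> p z" if "p \<in> G" "0 < y" "y \<le> z" for p y z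
    using phi[of p y z] that by (cases "y = z") (auto simp: G_def)
  have Lmono: "L p y < L p z" if "p \<in> G" "0 < y" "y < z" for p y z
  proof -
    have "K * Sg N0 M p \<ge> 0" using K Sg_nonneg[OF M] that by (simp add: G_def)
    then have "K * Sg N0 M p * \<phi> p y \<le> K * Sg N0 M p * \<phi> p z"
      using phile[of p y z] that by (intro mult_left_mono) auto
    then show ?thesis using that by (simp add: L_def)
  qed
  have Lcont: "continuous_on {xl p..xu p} (L p)" if "p \<in> G" for p
  proof -
    have "{xl p..xu p} \<subseteq> {0<..}" using xl[of p] that by (auto simp: G_def)
    then have "continuous_on {xl p..xu p} (\<phi> p)" using phic[of p] that continuous_on_subset by (auto simp: G_def)
    then show ?thesis unfolding L_def by (intro continuous_intros)
  qed
  have Rhmono: "Rh x p \<le> Rh x' p" if "p \<in> G" "B x" "\<forall>q\<in>G. x q \<le> x' q" for x x' p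
  proof -
    have "Rg N0 M (\<lambda>q. \<phi> q (x q)) p \<le> Rg N0 M (\<lambda>q. \<phi> q (x' q)) p"
    proof (rule Rg_mono[OF M])
      show "p \<in> grid N0" using that by (simp add: G_def)
      fix q assume q: "q \<in> grid N0"
      show "\<phi> q (x q) \<le> \<phi> q (x' q)"
        using that xl[OF q] q by (intro phile) (auto simp: G_def B_def intro: less_le_trans)
    qed
    then show ?thesis unfolding Rh_def using K by (simp add: mult_left_mono)
  qed
  have Rhbounds: "L p (xl p) \<le> Rh x p \<and> Rh x p \<le> L p (xu p)" if "p \<in> G" "B x" for x p
  proof -
    have xlB: "B xl" using xlu by (auto simp: B_def G_def)
    have xuB: "\<forall>q\<in>G. x q \<le> xu q" using that by (auto simp: B_def)
    have xlx: "\<forall>q\<in>G. xl q \<le> x q" using that by (auto simp: B_def)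
    have "Rh xl p \<le> Rh x p" by (rule Rhmono[OF that(1) xlB xlx])
    moreover have "Rh x p \<le> Rh xu p" by (rule Rhmono[OF that xuB])
    moreover have "Rh xl p = b p + K * Sg N0 M p * ml"
    proof -
      have "Rg N0 M (\<lambda>q. \<phi> q (xl q)) p = Rg N0 M (\<lambda>_. ml) p"
        unfolding Rg_def using xl that by (simp add: shp_grid shm_grid G_def)
      then show ?thesis by (simp add: Rh_def Rg_const)
    qed
    moreover have "Rh xu p = b p + K * Sg N0 M p * mu"
    proof -
      have "Rg N0 M (\<lambda>q. \<phi> q (xu q)) p = Rg N0 M (\<lambda>_. mu) p"
        unfolding Rg_def using xl that by (simp add: shp_grid shm_grid G_def)
      then show ?thesis by (simp add: Rh_def Rg_const)
    qed
    moreover have "L p (xl p) = xl p + K * Sg N0 M p * ml" "L p (xu p) = xu p + K * Sg N0 M p * mu"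
      using xl that by (auto simp: L_def G_def)
    ultimately show ?thesis using xl[of p] that by (auto simp: G_def)
  qed
  define T where "T = (\<lambda>x p. THE y. xl p \<le> y \<and> y \<le> xu p \<and> L p y = Rh x p)"
  have Tprop: "xl p \<le> T x p \<and> T x p \<le> xu p \<and> L p (T x p) = Rh x p" if "p \<in> G" "B x" for x p
  proof -
    have ex: "\<exists>y. xl p \<le> y \<and> y \<le> xu p \<and> L p y = Rh x p"
      using IVT'[of "L p" "xl p" "Rh x p" "xu p"] Rhbounds[OF that] Lcont[OF that(1)] xl[of p] that
      by (auto simp: G_def)
    have un: "y = z" if "xl p \<le> y" "xl p \<le> z" "L p y = L p z" for y z
      using Lmono[of p y z] Lmono[of p z y] that xl[of p] \<open>p \<in> G\<close>
      by (cases y z rule: linorder_cases) (auto simp: G_def)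
    have "\<exists>!y. xl p \<le> y \<and> y \<le> xu p \<and> L p y = Rh x p"
      using ex un by metis
    then show ?thesis unfolding T_def by (rule theI')
  qed
  have TB: "B (T x)" if "B x" for x
    using Tprop that by (auto simp: B_def)
  have Tmono: "T x p \<le> T x' p" if "p \<in> G" "B x" "B x'" "\<forall>q\<in>G. x q \<le> x' q" for x x' p
  proof (rule ccontr)
    assume "\<not> T x p \<le> T x' p"
    then have "T x' p < T x p" by simp
    moreover have "0 < T x' p" using Tprop[OF that(1,3)] xl[of p] that(1) by (auto simp: G_def)
    ultimately have "L p (T x' p) < L p (T x p)"
      using Lmono[OF that(1)] by blast
    then have "Rh x' p < Rh x p" using Tprop[OF that(1,2)] Tprop[OF that(1,3)] by simp
    with Rhmono[OF that(1,2,4)] show False by simp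
  qed
  define S where "S = {x. B x \<and> (\<forall>p\<in>G. x p \<le> T x p)}"
  have xlS: "xl \<in> S"
  proof -
    have "B xl" using xlu by (auto simp: B_def G_def)
    then show ?thesis using Tprop unfolding S_def by auto
  qed
  define xs where "xs = (\<lambda>p. Sup ((\<lambda>x. x p) ` S))"
  have bdd: "bdd_above ((\<lambda>x. x p) ` S)" if "p \<in> G" for p
    using that by (auto simp: S_def B_def bdd_above_def)
  have ne: "(\<lambda>x. x p) ` S \<noteq> {}" for p using xlS by auto
  have upper: "x p \<le> xs p" if "x \<in> S" "p \<in> G" for x p
    unfolding xs_def using that bdd by (intro cSup_upper) auto
  have xsB: "B xs"
    unfolding B_def
  proof
    fix p assume p: "p \<in> G"
    have "xl p \<le> xs p" using upper[OF xlS p] .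
    moreover have "xs p \<le> xu p" unfolding xs_def using ne p by (intro cSup_least) (auto simp: S_def B_def)
    ultimately show "xl p \<le> xs p \<and> xs p \<le> xu p" by simp
  qed
  have xsT: "xs p \<le> T xs p" if p: "p \<in> G" for p
  proof -
    have "Sup ((\<lambda>x. x p) ` S) \<le> T xs p"
    proof (rule cSup_least[OF ne])
      fix v assume "v \<in> (\<lambda>x. x p) ` S"
      then obtain x where x: "x \<in> S" "v = x p" by auto
      have "x p \<le> T x p" using x p by (auto simp: S_def)
      also have "T x p \<le> T xs p"
        using Tmono[OF p _ xsB] x upper by (auto simp: S_def)
      finally show "v \<le> T xs p" using x by simp
    qed
    then show ?thesis by (simp add: xs_def)
  qed
  have TxsS: "T xs \<in> S"
    unfolding S_def using TB[OF xsB] Tmono[OF _ xsB TB[OF xsB]] xsT by auto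
  have fixp: "T xs p = xs p" if p: "p \<in> G" for p
    using upper[OF TxsS p] xsT[OF p] by simp
  show ?thesis
  proof (intro exI conjI ballI)
    fix p assume "p \<in> grid N0"
    then have p: "p \<in> G" by (simp add: G_def)
    show "xs p > 0" using xsB p xl[of p] by (auto simp: B_def G_def)
    have "L p (xs p) = Rh xs p" using Tprop[OF p xsB] fixp[OF p] by simp
    then show "(xs p - b p) / \<tau> = divMgrad N0 M (\<lambda>q. \<phi> q (xs q)) p"
      using eq_reform[OF \<open>p \<in> grid N0\<close> tau, of xs b M "\<lambda>q. \<phi> q (xs q)"]
      by (simp add: L_def Rh_def K_def algebra_simps)
  qed
qed



definition slope :: "(real \<Rightarrow> real) \<Rightarrow> real \<Rightarrow> real \<Rightarrow> real \<Rightarrow> real" where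
  "slope f d q y = (if y = q then d else (f y - f q) / (y - q))"

lemma secant_mono:
  fixes f f' :: "real \<Rightarrow> real"
  assumes A: "open A" "connected A"
    and der: "\<And>w. w \<in> A \<Longrightarrow> (f has_real_derivative f' w) (at w)"
    and mono: "\<And>x y. x \<in> A \<Longrightarrow> y \<in> A \<Longrightarrow> x \<le> y \<Longrightarrow> f' x \<le> f' y"
    and q: "q \<in> A" and y: "y \<in> A" and z: "z \<in> A" and yz: "y \<le> z"
  shows "slope f (f' q) q y \<le> slope f (f' q) q z"
proof -
  have cvx: "convex_on A f" by (rule convex_on_realI[OF A(2) der mono])
  have tan: "f x - f q \<ge> f' q * (x - q)" if "x \<in> A" for x
    using convex_on_imp_above_tangent[OF cvx A(2), of q x "f' q"] that q A(1) der[OF q]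
    by (simp add: interior_open has_field_derivative_at_within)
  show ?thesis
  proof (cases "y = z")
    case True then show ?thesis by simp
  next
    case False
    then have yz': "y < z" using yz by simp
    consider "y < z" "z < q" | "y < q" "q < z" | "q < y" "y < z" | "y = q" | "z = q"
      using yz' by linarith
    then show ?thesis
    proof cases
      case 1
      then show ?thesis using convex_on_slope_le(2)[OF cvx y q, of z] by (simp add: slope_def)
    next
      case 2
      have e: "(f q - f z) / (q - z) = (f z - f q) / (z - q)" by (metis minus_diff_eq minus_divide_divide)
      then show ?thesis using 2 convex_on_slope_le[OF cvx y z, of q] by (simp add: slope_def)
    next
      case 3
      then have "(f q - f y) / (q - y) \<le> (f q - f z) / (q - z)"
        using convex_on_slope_le(1)[OF cvx q z, of y] by simp
      then show ?thesis using 3 by (simp add: slope_def divide_simps split: if_splits) argo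
    next
      case 4
      then have "f' q * (z - q) \<le> f z - f q" using tan[OF z] by simp
      then show ?thesis using 4 yz' by (simp add: slope_def pos_le_divide_eq)
    next
      case 5
      then have "f' q * (y - q) \<le> f y - f q" using tan[OF y] by simp
      then show ?thesis using 5 yz' by (simp add: slope_def neg_divide_le_eq)
    qed
  qed
qed

lemma secant_cont:
  fixes f f' :: "real \<Rightarrow> real"
  assumes A: "open A"
    and der: "\<And>w. w \<in> A \<Longrightarrow> (f has_real_derivative f' w) (at w)"
    and q: "q \<in> A"
  shows "continuous_on A (slope f (f' q) q)"
proof (rule continuous_at_imp_continuous_on, rule ballI)
  fix w assume w: "w \<in> A"
  show "isCont (slope f (f' q) q) w"
  proof (cases "w = q")
    case True
    have "((\<lambda>y. (f y - f q) / (y - q)) \<longlongrightarrow> f' q) (at q)"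
      using der[OF q] by (simp add: has_field_derivative_iff)
    then have "(slope f (f' q) q \<longlongrightarrow> f' q) (at q)"
      by (rule Lim_transform_eventually) (auto simp: slope_def eventually_at_filter)
    then show ?thesis using True by (simp add: isCont_def slope_def)
  next
    case False
    have c: "isCont (\<lambda>y. (f y - f q) / (y - q)) w"
      using False DERIV_isCont[OF der[OF w]] by (intro continuous_intros) auto
    have "\<forall>\<^sub>F y in nhds w. (f y - f q) / (y - q) = slope f (f' q) q y"
    proof -
      have "\<forall>\<^sub>F y in nhds w. y \<noteq> q" using False by (intro t1_space_nhds) 
      then show ?thesis by eventually_elim (simp add: slope_def)
    qed
    from isCont_cong[OF this] c show ?thesis by simp
  qed
qed



lemma Fi_deriv: "y > 0 \<Longrightarrow> (Fi Ui has_real_derivative ln y + Ui) (at y)"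
  unfolding Fi_def by (auto intro!: derivative_eq_intros simp: field_simps)

lemma Qi_slope: "q > 0 \<Longrightarrow> Qi Ui y q = slope (Fi Ui) (ln q + Ui) q y"
  unfolding Qi_def slope_def using DERIV_imp_deriv[OF Fi_deriv] by auto

lemma conn_pos: "connected {0::real<..}" by (simp add: connected_Ioi)

lemma Qi_mono: assumes "q > 0" "0 < y" "y \<le> z" shows "Qi Ui y q \<le> Qi Ui z q"
proof -
  have "slope (Fi Ui) ((\<lambda>w. ln w + Ui) q) q y \<le> slope (Fi Ui) ((\<lambda>w. ln w + Ui) q) q z"
    by (rule secant_mono[where A="{0<..}"]) (use assms Fi_deriv in auto)
  then show ?thesis using assms by (simp add: Qi_slope)
qed

lemma Qi_cont: assumes "q > 0" shows "continuous_on {0<..} (\<lambda>y. Qi Ui y q)"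
proof -
  have "continuous_on {0<..} (slope (Fi Ui) ((\<lambda>w. ln w + Ui) q) q)"
    by (rule secant_cont) (use assms Fi_deriv in auto)
  then show ?thesis using assms by (simp add: Qi_slope)
qed

lemma Qi_diag: "q > 0 \<Longrightarrow> Qi Ui q q = ln q + Ui"
  by (simp add: Qi_slope slope_def)

lemma Qi_ident: "(y - q) * Qi Ui y q = Fi Ui y - Fi Ui q"
  unfolding Qi_def by auto

definition phiD :: "real \<Rightarrow> real \<Rightarrow> (gpt \<Rightarrow> real) \<Rightarrow> gpt \<Rightarrow> real \<Rightarrow> real" where
  "phiD Ui \<tau> b p y = Qi Ui y (b p) + \<tau> * (ln y - ln (b p))"

lemma phiD_mono: "b p > 0 \<Longrightarrow> \<tau> > 0 \<Longrightarrow> 0 < y \<Longrightarrow> y < z \<Longrightarrow> phiD Ui \<tau> b p y < phiD Ui \<tau> b p z"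
  unfolding phiD_def using Qi_mono[of "b p" y z Ui] by (simp add: add_le_less_mono)

lemma phiD_cont: "b p > 0 \<Longrightarrow> continuous_on {0<..} (phiD Ui \<tau> b p)"
  unfolding phiD_def by (intro continuous_intros Qi_cont) auto

lemma phiD_diag: "b p > 0 \<Longrightarrow> phiD Ui \<tau> b p (b p) = ln (b p) + Ui"
  by (simp add: phiD_def Qi_diag)

lemma phiD_low: assumes b: "b p > 0" and tau: "\<tau> > 0" and m: "m \<le> ln (b p) + Ui"
  shows "\<exists>y. 0 < y \<and> y \<le> b p \<and> phiD Ui \<tau> b p y = m"
proof -
  define y0 where "y0 = b p * exp ((m - ln (b p) - Ui) / \<tau>)"
  have y0: "0 < y0" using b by (simp add: y0_def)
  have "exp ((m - ln (b p) - Ui) / \<tau>) \<le> 1" using m tau by (simp add: divide_nonpos_pos)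
  then have y0b: "y0 \<le> b p" using b by (simp add: y0_def mult_left_le)
  have "Qi Ui y0 (b p) \<le> Qi Ui (b p) (b p)" using Qi_mono[OF b y0 y0b] .
  moreover have "ln y0 - ln (b p) = (m - ln (b p) - Ui) / \<tau>" using b by (simp add: y0_def ln_mult)
  ultimately have "phiD Ui \<tau> b p y0 \<le> m" using b tau by (simp add: phiD_def Qi_diag)
  moreover have "m \<le> phiD Ui \<tau> b p (b p)" using phiD_diag[where b=b and p=p, OF b] m by simp
  moreover have "continuous_on {y0..b p} (phiD Ui \<tau> b p)"
    by (rule continuous_on_subset[OF phiD_cont[where b=b and p=p, OF b]]) (use y0 in auto)
  ultimately obtain y where "y0 \<le> y" "y \<le> b p" "phiD Ui \<tau> b p y = m"
    using IVT'[of "phiD Ui \<tau> b p" y0 m "b p"] y0b by auto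
  then show ?thesis using y0 by (intro exI[of _ y]) auto
qed

lemma phiD_high: assumes b: "b p > 0" and tau: "\<tau> > 0" and m: "m \<ge> ln (b p) + Ui"
  shows "\<exists>y. b p \<le> y \<and> phiD Ui \<tau> b p y = m"
proof -
  define y0 where "y0 = b p * exp ((m - ln (b p) - Ui) / \<tau>)"
  have y0: "0 < y0" using b by (simp add: y0_def)
  have "exp ((m - ln (b p) - Ui) / \<tau>) \<ge> 1" using m tau by simp
  then have y0b: "b p \<le> y0" using b by (simp add: y0_def mult_le_cancel_left1)
  have "Qi Ui (b p) (b p) \<le> Qi Ui y0 (b p)" using Qi_mono[OF b b y0b] .
  moreover have "ln y0 - ln (b p) = (m - ln (b p) - Ui) / \<tau>" using b by (simp add: y0_def ln_mult)
  ultimately have "phiD Ui \<tau> b p y0 \<ge> m" using b tau by (simp add: phiD_def Qi_diag)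
  moreover have "m \<ge> phiD Ui \<tau> b p (b p)" using phiD_diag[where b=b and p=p, OF b] m by simp
  moreover have "continuous_on {b p..y0} (phiD Ui \<tau> b p)"
    by (rule continuous_on_subset[OF phiD_cont[where b=b and p=p, OF b]]) (use b in auto)
  ultimately obtain y where "b p \<le> y" "y \<le> y0" "phiD Ui \<tau> b p y = m"
    using IVT'[of "phiD Ui \<tau> b p" "b p" m y0] y0b by auto
  then show ?thesis by auto
qed

lemma grid_ne: "N0 \<ge> 1 \<Longrightarrow> grid N0 \<noteq> {}"
  by (auto simp: grid_def)

lemma nl_exists:
  assumes N0: "N0 \<ge> 1" and tau: "\<tau> > 0" and Dpos: "\<forall>\<rho>>0. Di \<rho> > 0"
    and pos: "\<forall>p\<in>grid N0. \<rho>n p > 0"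
  shows "\<exists>\<rho>1. diffusion_nl N0 Di Ui \<tau> \<rho>n \<rho>1"
proof -
  have ne: "grid N0 \<noteq> {}" using grid_ne[OF N0] .
  define m0 where "m0 = Min (\<rho>n ` grid N0)"
  define m1 where "m1 = Max (\<rho>n ` grid N0)"
  have m0: "m0 \<le> \<rho>n p" "\<rho>n p \<le> m1" if "p \<in> grid N0" for p
    using that by (auto simp: m0_def m1_def)
  have m0pos: "m0 > 0" unfolding m0_def using ne pos by (subst Min_gr_iff) auto
  define M1 where "M1 = avgh N0 (\<lambda>q. Di (\<rho>n q))"
  have M1: "M1 d q \<ge> 0" if "q \<in> grid N0" for d q
    using Dpos pos that shp_grid[OF that] unfolding M1_def avgh_def
    by (simp add: less_imp_le add_pos_pos)
  have "\<exists>x. (\<forall>p\<in>grid N0. x p > 0) \<and> (\<forall>p\<in>grid N0. (x p - \<rho>n p) / \<tau> = divMgrad N0 M1 (\<lambda>q. (\<lambda>p y. y) q (x q)) p)"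
    by (rule sol_exists[where M=M1 and \<phi>="\<lambda>p y. y" and xl="\<lambda>_. m0" and xu="\<lambda>_. m1" and b=\<rho>n
        and ml=m0 and mu=m1]) (use M1 tau m0 m0pos in auto)
  then obtain \<rho>h where \<rho>hpos: "\<forall>p\<in>grid N0. \<rho>h p > 0"
    and \<rho>heq: "\<forall>p\<in>grid N0. (\<rho>h p - \<rho>n p) / \<tau> = divMgrad N0 M1 (\<lambda>q. (\<lambda>p y. y) q (\<rho>h q)) p"
    by blast
  define \<rho>half where "\<rho>half = (\<lambda>q. (\<rho>n q + \<rho>h q) / 2)"
  define M2 where "M2 = avgh N0 (\<lambda>q. Di (\<rho>half q) * \<rho>half q)"
  have half: "\<rho>half q > 0" if "q \<in> grid N0" for q
    using pos \<rho>hpos that by (simp add: \<rho>half_def add_pos_pos)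
  have M2: "M2 d q \<ge> 0" if "q \<in> grid N0" for d q
    using Dpos half[OF that] half[OF shp_grid[OF that]] unfolding M2_def avgh_def
    by (simp add: less_imp_le add_pos_pos)
  define ml where "ml = Min ((\<lambda>p. ln (\<rho>n p) + Ui) ` grid N0)"
  define mu where "mu = Max ((\<lambda>p. ln (\<rho>n p) + Ui) ` grid N0)"
  have ml: "ml \<le> ln (\<rho>n p) + Ui" "ln (\<rho>n p) + Ui \<le> mu" if "p \<in> grid N0" for p
    using that by (auto simp: ml_def mu_def)
  define xl where "xl = (\<lambda>p. SOME y. 0 < y \<and> y \<le> \<rho>n p \<and> phiD Ui \<tau> \<rho>n p y = ml)"
  define xu where "xu = (\<lambda>p. SOME y. \<rho>n p \<le> y \<and> phiD Ui \<tau> \<rho>n p y = mu)"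
  have xl: "0 < xl p \<and> xl p \<le> \<rho>n p \<and> phiD Ui \<tau> \<rho>n p (xl p) = ml" if "p \<in> grid N0" for p
    unfolding xl_def by (rule someI_ex, rule phiD_low) (use pos that tau ml in auto)
  have xu: "\<rho>n p \<le> xu p \<and> phiD Ui \<tau> \<rho>n p (xu p) = mu" if "p \<in> grid N0" for p
    unfolding xu_def by (rule someI_ex, rule phiD_high) (use pos that tau ml in auto)
  have "\<exists>x. (\<forall>p\<in>grid N0. x p > 0) \<and> (\<forall>p\<in>grid N0. (x p - \<rho>n p) / \<tau> = divMgrad N0 M2 (\<lambda>q. phiD Ui \<tau> \<rho>n q (x q)) p)"
    by (rule sol_exists[where M=M2 and \<phi>="phiD Ui \<tau> \<rho>n" and xl=xl and xu=xu and b=\<rho>n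
        and ml=ml and mu=mu]) (use M2 xl xu pos tau phiD_mono phiD_cont in auto)
  then obtain \<rho>1 where \<rho>1pos: "\<forall>p\<in>grid N0. \<rho>1 p > 0"
    and \<rho>1eq: "\<forall>p\<in>grid N0. (\<rho>1 p - \<rho>n p) / \<tau> = divMgrad N0 M2 (\<lambda>q. phiD Ui \<tau> \<rho>n q (\<rho>1 q)) p"
    by blast
  show ?thesis
    unfolding diffusion_nl_def Let_def
    apply (rule exI[of _ \<rho>1], rule exI[of _ \<rho>h])
    using \<rho>hpos \<rho>heq \<rho>1pos \<rho>1eq unfolding M1_def M2_def \<rho>half_def phiD_def by simp
qed

lemma ln_mono_prod: "0 < (x::real) \<Longrightarrow> 0 < y \<Longrightarrow> (x - y) * (ln x - ln y) \<ge> 0"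
proof (cases "x \<le> y")
  case True
  assume "0 < x" "0 < y"
  then have "ln x \<le> ln y" using True by simp
  then show ?thesis using True by (intro mult_nonpos_nonpos) auto
next
  case False
  assume "0 < x" "0 < y"
  then have "ln y \<le> ln x" using False by simp
  then show ?thesis using False by (intro mult_nonneg_nonneg) auto
qed

lemma nl_energy:
  assumes tau: "\<tau> > 0" and Dpos: "\<forall>\<rho>>0. Di \<rho> > 0"
    and pos: "\<forall>p\<in>grid N0. \<rho>n p > 0" and d: "diffusion_nl N0 Di Ui \<tau> \<rho>n \<rho>1"
  shows "(\<Sum>p\<in>grid N0. Fi Ui (\<rho>1 p)) \<le> (\<Sum>p\<in>grid N0. Fi Ui (\<rho>n p))"
proof -
  obtain \<rho>h where \<rho>hpos: "\<forall>p\<in>grid N0. \<rho>h p > 0" and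
    r1: "\<forall>p\<in>grid N0. \<rho>1 p > 0" and
    eq: "\<forall>p\<in>grid N0. (\<rho>1 p - \<rho>n p) / \<tau> = divMgrad N0 (avgh N0 (\<lambda>q. Di ((\<rho>n q + \<rho>h q) / 2) * ((\<rho>n q + \<rho>h q) / 2)))
               (\<lambda>q. Qi Ui (\<rho>1 q) (\<rho>n q) + \<tau> * (ln (\<rho>1 q) - ln (\<rho>n q))) p"
    using d unfolding diffusion_nl_def Let_def by blast
  have M: "avgh N0 (\<lambda>q. Di ((\<rho>n q + \<rho>h q) / 2) * ((\<rho>n q + \<rho>h q) / 2)) d q \<ge> 0" if "q \<in> grid N0" for d q
  proof -
    have h: "(\<rho>n x + \<rho>h x) / 2 > 0" if "x \<in> grid N0" for x using pos \<rho>hpos that by (simp add: add_pos_pos)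
    show ?thesis using Dpos h[OF that] h[OF shp_grid[OF that]] unfolding avgh_def
      by (simp add: less_imp_le add_pos_pos)
  qed
  have "(\<Sum>p\<in>grid N0. (\<rho>1 p - \<rho>n p) * (Qi Ui (\<rho>1 p) (\<rho>n p) + \<tau> * (ln (\<rho>1 p) - ln (\<rho>n p)))) \<le> 0"
    by (rule sol_energy[OF M tau eq])
  moreover have "(\<Sum>p\<in>grid N0. Fi Ui (\<rho>1 p) - Fi Ui (\<rho>n p)) \<le>
      (\<Sum>p\<in>grid N0. (\<rho>1 p - \<rho>n p) * (Qi Ui (\<rho>1 p) (\<rho>n p) + \<tau> * (ln (\<rho>1 p) - ln (\<rho>n p))))"
  proof (rule sum_mono)
    fix p assume p: "p \<in> grid N0"
    have "0 \<le> \<tau> * ((\<rho>1 p - \<rho>n p) * (ln (\<rho>1 p) - ln (\<rho>n p)))"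
      using ln_mono_prod[of "\<rho>1 p" "\<rho>n p"] r1 pos p tau by simp
    then show "Fi Ui (\<rho>1 p) - Fi Ui (\<rho>n p) \<le> (\<rho>1 p - \<rho>n p) * (Qi Ui (\<rho>1 p) (\<rho>n p) + \<tau> * (ln (\<rho>1 p) - ln (\<rho>n p)))"
      using Qi_ident[of "\<rho>1 p" "\<rho>n p" Ui] by (simp add: algebra_simps)
  qed
  ultimately show ?thesis by (simp add: sum_subtractf)
qed

lemma nl_unique:
  assumes tau: "\<tau> > 0" and Dpos: "\<forall>\<rho>>0. Di \<rho> > 0"
    and pos: "\<forall>p\<in>grid N0. \<rho>n p > 0" and agree: "\<forall>p\<in>grid N0. \<rho>n' p = \<rho>n p"
    and d1: "diffusion_nl N0 Di Ui \<tau> \<rho>n \<rho>1" and d2: "diffusion_nl N0 Di Ui \<tau> \<rho>n' \<rho>1'"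
  shows "\<forall>p\<in>grid N0. \<rho>1 p = \<rho>1' p"
proof -
  obtain \<rho>h where \<rho>hpos: "\<forall>p\<in>grid N0. \<rho>h p > 0" and
    h1: "\<forall>p\<in>grid N0. (\<rho>h p - \<rho>n p) / \<tau> = divMgrad N0 (avgh N0 (\<lambda>q. Di (\<rho>n q))) \<rho>h p" and
    r1: "\<forall>p\<in>grid N0. \<rho>1 p > 0" and
    eq1: "\<forall>p\<in>grid N0. (\<rho>1 p - \<rho>n p) / \<tau> = divMgrad N0 (avgh N0 (\<lambda>q. Di ((\<rho>n q + \<rho>h q) / 2) * ((\<rho>n q + \<rho>h q) / 2)))
               (\<lambda>q. Qi Ui (\<rho>1 q) (\<rho>n q) + \<tau> * (ln (\<rho>1 q) - ln (\<rho>n q))) p"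
    using d1 unfolding diffusion_nl_def Let_def by blast
  obtain \<rho>h' where \<rho>hpos': "\<forall>p\<in>grid N0. \<rho>h' p > 0" and
    h2: "\<forall>p\<in>grid N0. (\<rho>h' p - \<rho>n' p) / \<tau> = divMgrad N0 (avgh N0 (\<lambda>q. Di (\<rho>n' q))) \<rho>h' p" and
    r2: "\<forall>p\<in>grid N0. \<rho>1' p > 0" and
    eq2: "\<forall>p\<in>grid N0. (\<rho>1' p - \<rho>n' p) / \<tau> = divMgrad N0 (avgh N0 (\<lambda>q. Di ((\<rho>n' q + \<rho>h' q) / 2) * ((\<rho>n' q + \<rho>h' q) / 2)))
               (\<lambda>q. Qi Ui (\<rho>1' q) (\<rho>n' q) + \<tau> * (ln (\<rho>1' q) - ln (\<rho>n' q))) p"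
    using d2 unfolding diffusion_nl_def Let_def by blast
  define M1 where "M1 = avgh N0 (\<lambda>q. Di (\<rho>n q))"
  have M1: "M1 d q \<ge> 0" if "q \<in> grid N0" for d q
    using Dpos pos that shp_grid[OF that] unfolding M1_def avgh_def
    by (simp add: less_imp_le add_pos_pos)
  have h1': "\<forall>p\<in>grid N0. (\<rho>h p - \<rho>n p) / \<tau> = divMgrad N0 M1 (\<lambda>q. (\<lambda>p y. y) q (\<rho>h q)) p"
    using h1 by (simp add: M1_def)
  have h2': "\<forall>p\<in>grid N0. (\<rho>h' p - \<rho>n p) / \<tau> = divMgrad N0 M1 (\<lambda>q. (\<lambda>p y. y) q (\<rho>h' q)) p"
  proof
    fix p assume p: "p \<in> grid N0"
    have "divMgrad N0 (avgh N0 (\<lambda>q. Di (\<rho>n' q))) \<rho>h' p = divMgrad N0 M1 \<rho>h' p"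
      by (rule divMgrad_cong[OF p]) (use agree shp_grid in \<open>auto simp: M1_def avgh_def\<close>)
    then show "(\<rho>h' p - \<rho>n p) / \<tau> = divMgrad N0 M1 (\<lambda>q. (\<lambda>p y. y) q (\<rho>h' q)) p"
      using h2 p agree by simp
  qed
  have hh: "\<forall>p\<in>grid N0. \<rho>h p = \<rho>h' p"
    by (rule sol_unique[OF M1 tau _ \<rho>hpos \<rho>hpos' h1' h2']) auto
  define M2 where "M2 = avgh N0 (\<lambda>q. Di ((\<rho>n q + \<rho>h q) / 2) * ((\<rho>n q + \<rho>h q) / 2))"
  have M2: "M2 d q \<ge> 0" if "q \<in> grid N0" for d q
  proof -
    have h: "(\<rho>n x + \<rho>h x) / 2 > 0" if "x \<in> grid N0" for x using pos \<rho>hpos that by (simp add: add_pos_pos)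
    show ?thesis using Dpos h[OF that] h[OF shp_grid[OF that]] unfolding M2_def avgh_def
      by (simp add: less_imp_le add_pos_pos)
  qed
  have e1: "\<forall>p\<in>grid N0. (\<rho>1 p - \<rho>n p) / \<tau> = divMgrad N0 M2 (\<lambda>q. phiD Ui \<tau> \<rho>n q (\<rho>1 q)) p"
    using eq1 by (simp add: M2_def phiD_def)
  have e2: "\<forall>p\<in>grid N0. (\<rho>1' p - \<rho>n p) / \<tau> = divMgrad N0 M2 (\<lambda>q. phiD Ui \<tau> \<rho>n q (\<rho>1' q)) p"
  proof
    fix p assume p: "p \<in> grid N0"
    have "divMgrad N0 (avgh N0 (\<lambda>q. Di ((\<rho>n' q + \<rho>h' q) / 2) * ((\<rho>n' q + \<rho>h' q) / 2)))
               (\<lambda>q. Qi Ui (\<rho>1' q) (\<rho>n' q) + \<tau> * (ln (\<rho>1' q) - ln (\<rho>n' q))) p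
       = divMgrad N0 M2 (\<lambda>q. phiD Ui \<tau> \<rho>n q (\<rho>1' q)) p"
      by (rule divMgrad_cong[OF p]) (use agree hh shp_grid in \<open>auto simp: M2_def avgh_def phiD_def\<close>)
    then show "(\<rho>1' p - \<rho>n p) / \<tau> = divMgrad N0 M2 (\<lambda>q. phiD Ui \<tau> \<rho>n q (\<rho>1' q)) p"
      using eq2 p agree by simp
  qed
  show ?thesis
    by (rule sol_unique[OF M2 tau _ r1 r2 e1 e2]) (use phiD_mono pos tau in auto)
qed



definition Aop :: "nat \<Rightarrow> (gpt \<Rightarrow> real) \<Rightarrow> gpt \<Rightarrow> real" where
  "Aop N0 u p = real N0 * real N0 * (\<Sum>d<3. u (shp N0 d p) + u (shm N0 d p))"

definition cc :: "nat \<Rightarrow> real" where "cc N0 = 6 * real N0 * real N0"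

definition nrm :: "nat \<Rightarrow> (gpt \<Rightarrow> real) \<Rightarrow> real" where
  "nrm N0 u = (\<Sum>p\<in>grid N0. \<bar>u p\<bar>)"

lemma cc_nonneg: "cc N0 \<ge> 0" by (simp add: cc_def)

lemma laph_A: "p \<in> grid N0 \<Longrightarrow> laph N0 u p = Aop N0 u p - cc N0 * u p"
  unfolding laph_def by (simp add: divMgrad_expand Aop_def cc_def sum.distrib sum_subtractf
      sum_distrib_left algebra_simps)

lemma Aop_loc: "(\<And>q. q \<in> grid N0 \<Longrightarrow> u q = v q) \<Longrightarrow> p \<in> grid N0 \<Longrightarrow> Aop N0 u p = Aop N0 v p"
  by (simp add: Aop_def shp_grid shm_grid)

lemma Aop_nonneg: "(\<And>q. q \<in> grid N0 \<Longrightarrow> u q \<ge> 0) \<Longrightarrow> p \<in> grid N0 \<Longrightarrow> Aop N0 u p \<ge> 0"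
  unfolding Aop_def by (intro mult_nonneg_nonneg sum_nonneg add_nonneg_nonneg) (auto simp: shp_grid shm_grid)

lemma Aop_sum: "Aop N0 (\<lambda>x. \<Sum>j\<in>J. g j * w j x) p = (\<Sum>j\<in>J. g j * Aop N0 (w j) p)"
  unfolding Aop_def by (simp add: sum.distrib sum_distrib_left sum.swap[of _ J] algebra_simps)

lemma lapow_loc: "(\<And>q. q \<in> grid N0 \<Longrightarrow> u q = v q) \<Longrightarrow> p \<in> grid N0 \<Longrightarrow>
   (laph N0 ^^ m) u p = (laph N0 ^^ m) v p"
proof (induction m arbitrary: p)
  case 0 then show ?case by simp
next
  case (Suc m)
  show ?case using Suc by (simp add: laph_A Aop_loc[of N0 "(laph N0 ^^ m) u" "(laph N0 ^^ m) v"])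
qed

lemma Apow_loc: "(\<And>q. q \<in> grid N0 \<Longrightarrow> u q = v q) \<Longrightarrow> p \<in> grid N0 \<Longrightarrow>
   (Aop N0 ^^ m) u p = (Aop N0 ^^ m) v p"
proof (induction m arbitrary: p)
  case 0 then show ?case by simp
next
  case (Suc m)
  show ?case using Suc by (simp add: Aop_loc[of N0 "(Aop N0 ^^ m) u" "(Aop N0 ^^ m) v"])
qed

lemma Apow_nonneg: "(\<And>q. q \<in> grid N0 \<Longrightarrow> u q \<ge> 0) \<Longrightarrow> p \<in> grid N0 \<Longrightarrow> (Aop N0 ^^ m) u p \<ge> 0"
proof (induction m arbitrary: p)
  case 0 then show ?case by simp
next
  case (Suc m) then show ?case by (simp add: Aop_nonneg)
qed

lemma nrm_Aop: "nrm N0 (Aop N0 u) \<le> cc N0 * nrm N0 u"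
proof -
  have "nrm N0 (Aop N0 u) \<le> (\<Sum>p\<in>grid N0. real N0 * real N0 * (\<Sum>d<3. \<bar>u (shp N0 d p)\<bar> + \<bar>u (shm N0 d p)\<bar>))"
    unfolding nrm_def Aop_def
  proof (rule sum_mono)
    fix p
    have "\<bar>\<Sum>d<3. u (shp N0 d p) + u (shm N0 d p)\<bar> \<le> (\<Sum>d<3. \<bar>u (shp N0 d p) + u (shm N0 d p)\<bar>)"
      by (rule sum_abs)
    also have "\<dots> \<le> (\<Sum>d<3. \<bar>u (shp N0 d p)\<bar> + \<bar>u (shm N0 d p)\<bar>)"
      by (intro sum_mono abs_triangle_ineq)
    finally show "\<bar>real N0 * real N0 * (\<Sum>d<3. u (shp N0 d p) + u (shm N0 d p))\<bar>
       \<le> real N0 * real N0 * (\<Sum>d<3. \<bar>u (shp N0 d p)\<bar> + \<bar>u (shm N0 d p)\<bar>)"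
      by (simp add: abs_mult mult_left_mono)
  qed
  also have "\<dots> = real N0 * real N0 * (\<Sum>p\<in>grid N0. \<Sum>d<3. \<bar>u (shp N0 d p)\<bar> + \<bar>u (shm N0 d p)\<bar>)"
    by (rule sum_distrib_left[symmetric])
  also have "\<dots> = real N0 * real N0 * (\<Sum>d<3. \<Sum>p\<in>grid N0. \<bar>u (shp N0 d p)\<bar> + \<bar>u (shm N0 d p)\<bar>)"
    by (subst sum.swap) simp
  also have "\<dots> = real N0 * real N0 * (\<Sum>d<3. (\<Sum>p\<in>grid N0. \<bar>u (shp N0 d p)\<bar>) + (\<Sum>p\<in>grid N0. \<bar>u (shm N0 d p)\<bar>))"
    by (simp add: sum.distrib)
  also have "\<dots> = cc N0 * nrm N0 u"
    by (simp add: sum_shp[of "\<lambda>q. \<bar>u q\<bar>"] sum_shm[of "\<lambda>q. \<bar>u q\<bar>"] nrm_def cc_def)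
  finally show ?thesis .
qed

lemma nrm_nonneg: "nrm N0 u \<ge> 0" by (simp add: nrm_def)

lemma nrm_Apow: "nrm N0 ((Aop N0 ^^ j) u) \<le> cc N0 ^ j * nrm N0 u"
proof (induction j)
  case 0 then show ?case by simp
next
  case (Suc j)
  have "nrm N0 ((Aop N0 ^^ Suc j) u) \<le> cc N0 * nrm N0 ((Aop N0 ^^ j) u)" by (simp add: nrm_Aop)
  also have "\<dots> \<le> cc N0 * (cc N0 ^ j * nrm N0 u)" using Suc cc_nonneg by (rule mult_left_mono)
  finally show ?case by (simp add: algebra_simps)
qed

lemma abs_le_nrm: "p \<in> grid N0 \<Longrightarrow> \<bar>u p\<bar> \<le> nrm N0 u"
  unfolding nrm_def by (rule member_le_sum) auto

lemma binom_step:
  fixes a :: "nat \<Rightarrow> real"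
  shows "(\<Sum>j\<le>m. real (m choose j) * s ^ (m - j) * a (Suc j)) + s * (\<Sum>j\<le>m. real (m choose j) * s ^ (m - j) * a j)
       = (\<Sum>j\<le>Suc m. real (Suc m choose j) * s ^ (Suc m - j) * a j)"
proof -
  have T: "(\<Sum>j\<le>Suc m. real (Suc m choose j) * s ^ (Suc m - j) * a j) =
     s ^ Suc m * a 0 + (\<Sum>i\<le>m. real (m choose i) * s ^ (m - i) * a (Suc i))
       + (\<Sum>i\<le>m. real (m choose Suc i) * s ^ (m - i) * a (Suc i))"
    apply (subst sum.atMost_shift)
    apply (simp only: lessThan_Suc_atMost binomial_Suc_Suc of_nat_add)
    apply (simp add: sum.distrib algebra_simps)
    done
  have Y: "(\<Sum>i\<le>m. real (m choose Suc i) * s ^ (m - i) * a (Suc i)) =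
           (\<Sum>i<m. real (m choose Suc i) * s ^ (m - i) * a (Suc i))"
    by (simp add: lessThan_Suc_atMost[symmetric])
  have Z: "s * (\<Sum>j\<le>m. real (m choose j) * s ^ (m - j) * a j) =
        (\<Sum>j\<le>m. real (m choose j) * s ^ (Suc m - j) * a j)"
    by (simp add: sum_distrib_left algebra_simps Suc_diff_le)
  also have "\<dots> = s ^ Suc m * a 0 + (\<Sum>i<m. real (m choose Suc i) * s ^ (m - i) * a (Suc i))"
    by (simp add: sum.atMost_shift)
  finally show ?thesis using T Y by simp
qed

lemma lapow_binom: "p \<in> grid N0 \<Longrightarrow>
   (laph N0 ^^ m) u p = (\<Sum>j\<le>m. real (m choose j) * (- cc N0) ^ (m - j) * (Aop N0 ^^ j) u p)"
proof (induction m arbitrary: p)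
  case 0 then show ?case by simp
next
  case (Suc m)
  have "Aop N0 ((laph N0 ^^ m) u) p =
        Aop N0 (\<lambda>x. \<Sum>j\<le>m. (real (m choose j) * (- cc N0) ^ (m - j)) * (Aop N0 ^^ j) u x) p"
    by (rule Aop_loc[OF _ Suc.prems]) (simp add: Suc.IH mult.assoc)
  also have "\<dots> = (\<Sum>j\<le>m. real (m choose j) * (- cc N0) ^ (m - j) * (Aop N0 ^^ Suc j) u p)"
    by (simp add: Aop_sum)
  finally have A: "Aop N0 ((laph N0 ^^ m) u) p = \<dots>" .
  have "(laph N0 ^^ Suc m) u p = Aop N0 ((laph N0 ^^ m) u) p + (- cc N0) * (laph N0 ^^ m) u p"
    using Suc.prems by (simp add: laph_A)
  also have "\<dots> = (\<Sum>j\<le>Suc m. real (Suc m choose j) * (- cc N0) ^ (Suc m - j) * (Aop N0 ^^ j) u p)"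
    unfolding A Suc.IH[OF Suc.prems] by (rule binom_step[where a="\<lambda>j. (Aop N0 ^^ j) u p"])
  finally show ?case .
qed

lemma exp_series_summable: "summable (\<lambda>n. (x::real) ^ n / fact n)"
  using summable_exp[of x] by (simp add: field_simps)

lemma heat_rep:
  assumes t: "t \<ge> 0" and p: "p \<in> grid N0"
  shows "(\<lambda>m. t ^ m / fact m * (laph N0 ^^ m) u p) sums
          ((\<Sum>j. t ^ j / fact j * (Aop N0 ^^ j) u p) * exp (- cc N0 * t))"
    and "summable (\<lambda>j. t ^ j / fact j * (Aop N0 ^^ j) u p)"
proof -
  define a where "a = (\<lambda>j. t ^ j / fact j * (Aop N0 ^^ j) u p)"
  define b where "b = (\<lambda>k. (- cc N0 * t) ^ k / fact k)"
  have abnd: "norm (a j) \<le> (cc N0 * t) ^ j / fact j * nrm N0 u" for j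
  proof -
    have "\<bar>(Aop N0 ^^ j) u p\<bar> \<le> cc N0 ^ j * nrm N0 u"
      using abs_le_nrm[OF p] nrm_Apow order_trans by blast
    then have "t ^ j / fact j * \<bar>(Aop N0 ^^ j) u p\<bar> \<le> t ^ j / fact j * (cc N0 ^ j * nrm N0 u)"
      using t by (intro mult_left_mono) auto
    then show ?thesis using t by (simp add: a_def abs_mult power_mult_distrib field_simps)
  qed
  have sa: "summable (\<lambda>j. norm (a j))"
    by (rule summable_comparison_test[OF _ summable_mult2[OF exp_series_summable]])
       (use abnd in auto)
  have sb: "summable (\<lambda>k. norm (b k))"
    using exp_series_summable[of "cc N0 * t"] cc_nonneg t
    by (simp add: b_def norm_divide norm_power abs_mult)
  have bsum: "suminf b = exp (- cc N0 * t)"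
    using exp_converges[of "- cc N0 * t"] by (simp add: b_def sums_iff field_simps)
  have termeq: "(\<Sum>i\<le>k. a i * b (k - i)) = t ^ k / fact k * (laph N0 ^^ k) u p" for k
  proof -
    have "t ^ k / fact k * (laph N0 ^^ k) u p =
       (\<Sum>i\<le>k. t ^ k / fact k * (real (k choose i) * (- cc N0) ^ (k - i) * (Aop N0 ^^ i) u p))"
      by (simp add: lapow_binom[OF p] sum_distrib_left)
    also have "\<dots> = (\<Sum>i\<le>k. a i * b (k - i))"
    proof (rule sum.cong[OF refl])
      fix i assume "i \<in> {..k}"
      then have ik: "i \<le> k" by simp
      have tk: "t ^ k = t ^ i * t ^ (k - i)" using ik by (simp add: power_add[symmetric])
      show "t ^ k / fact k * (real (k choose i) * (- cc N0) ^ (k - i) * (Aop N0 ^^ i) u p) = a i * b (k - i)"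
        unfolding a_def b_def binomial_fact[OF ik] tk power_mult_distrib
        by (simp add: field_simps)
    qed
    finally show ?thesis by simp
  qed
  have "(\<lambda>k. \<Sum>i\<le>k. a i * b (k - i)) sums (suminf a * suminf b)"
    by (rule Cauchy_product_sums[OF sa sb])
  then have "(\<lambda>k. t ^ k / fact k * (laph N0 ^^ k) u p) sums (suminf a * exp (- cc N0 * t))"
    by (simp only: termeq bsum)
  then show "(\<lambda>m. t ^ m / fact m * (laph N0 ^^ m) u p) sums
          ((\<Sum>j. t ^ j / fact j * (Aop N0 ^^ j) u p) * exp (- cc N0 * t))"
    by (simp add: a_def)
  show "summable (\<lambda>j. t ^ j / fact j * (Aop N0 ^^ j) u p)"
    using summable_norm_cancel[OF sa] by (simp add: a_def)
qed

lemma heat_eq: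
  assumes t: "t \<ge> 0" and p: "p \<in> grid N0"
  shows "heat_exp N0 t u p = (\<Sum>j. t ^ j / fact j * (Aop N0 ^^ j) u p) * exp (- cc N0 * t)"
    and "summable (\<lambda>m. t ^ m / fact m * (laph N0 ^^ m) u p)"
  using heat_rep[OF t p, of u] by (auto simp: heat_exp_def sums_iff)

lemma heat_lower:
  assumes t: "t \<ge> 0" and p: "p \<in> grid N0" and u: "\<And>q. q \<in> grid N0 \<Longrightarrow> u q \<ge> 0"
  shows "heat_exp N0 t u p \<ge> exp (- cc N0 * t) * u p"
proof -
  have "(\<Sum>j\<in>{0}. t ^ j / fact j * (Aop N0 ^^ j) u p) \<le> (\<Sum>j. t ^ j / fact j * (Aop N0 ^^ j) u p)"
    by (rule sum_le_suminf[OF heat_rep(2)[OF t p]]) (use t Apow_nonneg[OF u p] in auto)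
  then have "u p \<le> (\<Sum>j. t ^ j / fact j * (Aop N0 ^^ j) u p)" by simp
  then show ?thesis unfolding heat_eq(1)[OF t p] by (simp add: mult.commute)
qed

lemma laph_lin: "laph N0 (\<lambda>x. a * u x + b * v x) p = a * laph N0 u p + b * laph N0 v p"
  unfolding laph_def divMgrad_def divh_def gradh_def
  by (simp add: sum_distrib_left sum.distrib[symmetric] algebra_simps add_divide_distrib diff_divide_distrib)

lemma laph_zero: "laph N0 (\<lambda>x. 0) p = 0"
  unfolding laph_def divMgrad_def divh_def gradh_def by simp

lemma laph_const: "laph N0 (\<lambda>x. c) p = 0"
  unfolding laph_def divMgrad_def divh_def gradh_def by simp

lemma laph_sum: "finite Q \<Longrightarrow> laph N0 (\<lambda>x. \<Sum>q\<in>Q. g q * f q x) p = (\<Sum>q\<in>Q. g q * laph N0 (f q) p)"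
proof (induction Q rule: finite_induct)
  case empty then show ?case by (simp add: laph_zero)
next
  case (insert a Q)
  have "laph N0 (\<lambda>x. \<Sum>q\<in>insert a Q. g q * f q x) p = laph N0 (\<lambda>x. g a * f a x + 1 * (\<Sum>q\<in>Q. g q * f q x)) p"
    using insert by simp
  also have "\<dots> = g a * laph N0 (f a) p + laph N0 (\<lambda>x. \<Sum>q\<in>Q. g q * f q x) p"
    by (subst laph_lin) simp
  finally show ?case using insert by simp
qed

lemma lapow_sum: "finite Q \<Longrightarrow> (laph N0 ^^ m) (\<lambda>x. \<Sum>q\<in>Q. g q * f q x) = (\<lambda>p. \<Sum>q\<in>Q. g q * (laph N0 ^^ m) (f q) p)"
proof (induction m)
  case 0 then show ?case by simp
next
  case (Suc m) then show ?case by (simp add: laph_sum)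
qed

lemma lapow_const: "(laph N0 ^^ m) (\<lambda>x. c) = (\<lambda>x. if m = 0 then c else 0)"
proof (induction m)
  case 0 then show ?case by simp
next
  case (Suc m) then show ?case by (auto simp: laph_const)
qed

lemma heat_loc: "p \<in> grid N0 \<Longrightarrow> (\<And>q. q \<in> grid N0 \<Longrightarrow> u q = v q) \<Longrightarrow> heat_exp N0 t u p = heat_exp N0 t v p"
  unfolding heat_exp_def using lapow_loc by metis

lemma heat_sum:
  assumes t: "t \<ge> 0" and p: "p \<in> grid N0" and Q: "finite Q"
  shows "heat_exp N0 t (\<lambda>x. \<Sum>q\<in>Q. g q * f q x) p = (\<Sum>q\<in>Q. g q * heat_exp N0 t (f q) p)"
proof -
  have "heat_exp N0 t (\<lambda>x. \<Sum>q\<in>Q. g q * f q x) p = (\<Sum>m. \<Sum>q\<in>Q. g q * (t ^ m / fact m * (laph N0 ^^ m) (f q) p))"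
    unfolding heat_exp_def lapow_sum[OF Q] by (simp add: sum_distrib_left algebra_simps)
  also have "\<dots> = (\<Sum>q\<in>Q. \<Sum>m. g q * (t ^ m / fact m * (laph N0 ^^ m) (f q) p))"
    by (rule suminf_sum) (intro summable_mult heat_eq(2)[OF t p])
  also have "\<dots> = (\<Sum>q\<in>Q. g q * heat_exp N0 t (f q) p)"
    unfolding heat_exp_def by (intro sum.cong refl suminf_mult heat_eq(2)[OF t p])
  finally show ?thesis .
qed

definition dl :: "gpt \<Rightarrow> gpt \<Rightarrow> real" where "dl q = (\<lambda>x. if x = q then 1 else 0)"

lemma heat_kernel:
  assumes t: "t \<ge> 0" and p: "p \<in> grid N0"
  shows "heat_exp N0 t u p = (\<Sum>q\<in>grid N0. u q * heat_exp N0 t (dl q) p)"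
proof -
  have "heat_exp N0 t u p = heat_exp N0 t (\<lambda>x. \<Sum>q\<in>grid N0. u q * dl q x) p"
  proof (rule heat_loc[OF p])
    fix q assume "q \<in> grid N0"
    moreover have "(\<Sum>qa\<in>grid N0. u qa * dl qa q) = (\<Sum>qa\<in>grid N0. if q = qa then u qa else 0)"
      by (rule sum.cong) (auto simp: dl_def)
    ultimately show "u q = (\<Sum>qa\<in>grid N0. u qa * dl qa q)" by simp
  qed
  also have "\<dots> = (\<Sum>q\<in>grid N0. u q * heat_exp N0 t (dl q) p)"
    by (rule heat_sum[OF t p]) simp
  finally show ?thesis .
qed

lemma heat_one: "heat_exp N0 t (\<lambda>x. 1) p = 1"
proof -
  have "(\<lambda>m. t ^ m / fact m * (laph N0 ^^ m) (\<lambda>x. 1) p) = (\<lambda>m. if m = 0 then 1 else 0)"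
    by (auto simp: lapow_const)
  moreover have "(\<lambda>m::nat. if m = 0 then 1 else (0::real)) sums 1"
    using sums_single[of 0 "\<lambda>_. 1::real"] by simp
  ultimately show ?thesis unfolding heat_exp_def by (simp add: sums_iff)
qed

lemma E_nonneg: "t \<ge> 0 \<Longrightarrow> p \<in> grid N0 \<Longrightarrow> heat_exp N0 t (dl q) p \<ge> 0"
  using heat_lower[of t p N0 "dl q"] by (simp add: dl_def) (smt (verit) exp_gt_zero mult_nonneg_nonneg)

lemma E_row: assumes t: "t \<ge> 0" and p: "p \<in> grid N0"
  shows "(\<Sum>q\<in>grid N0. heat_exp N0 t (dl q) p) = 1"
  using heat_kernel[OF t p, of "\<lambda>x. 1"] heat_one[of N0 t p] by simp

lemma E_col: assumes t: "t \<ge> 0" and q: "q \<in> grid N0"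
  shows "(\<Sum>p\<in>grid N0. heat_exp N0 t (dl q) p) = 1"
proof -
  have "(\<Sum>p\<in>grid N0. heat_exp N0 t (dl q) p) = (\<Sum>m. \<Sum>p\<in>grid N0. t ^ m / fact m * (laph N0 ^^ m) (dl q) p)"
    unfolding heat_exp_def by (rule suminf_sum[symmetric]) (use heat_eq(2)[OF t] in auto)
  also have "\<dots> = (\<Sum>m. if m = 0 then 1 else 0)"
  proof (rule arg_cong[where f=suminf], rule ext)
    fix m
    show "(\<Sum>p\<in>grid N0. t ^ m / fact m * (laph N0 ^^ m) (dl q) p) = (if m = 0 then 1 else 0)"
    proof (cases m)
      case 0 then show ?thesis using q by (simp add: dl_def)
    next
      case (Suc k)
      have "(\<Sum>p\<in>grid N0. (laph N0 ^^ m) (dl q) p) = 0"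
        using Suc by (simp add: laph_def divMgrad_sum0)
      moreover have "(\<Sum>p\<in>grid N0. t ^ m / fact m * (laph N0 ^^ m) (dl q) p) = t ^ m / fact m * (\<Sum>p\<in>grid N0. (laph N0 ^^ m) (dl q) p)"
        by (rule sum_distrib_left[symmetric])
      ultimately show ?thesis using Suc by simp
    qed
  qed
  also have "\<dots> = 1"
    using sums_single[of 0 "\<lambda>_. 1::real"] by (simp add: sums_iff)
  finally show ?thesis .
qed

lemma Fi_convex: "convex_on {0<..} (Fi Ui)"
  by (rule convex_on_realI[OF connected_Ioi Fi_deriv]) auto

lemma heat_energy:
  assumes t: "t \<ge> 0" and N0: "N0 \<ge> 1" and pos: "\<forall>q\<in>grid N0. u q > 0"
  shows "(\<Sum>p\<in>grid N0. Fi Ui (heat_exp N0 t u p)) \<le> (\<Sum>p\<in>grid N0. Fi Ui (u p))"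
proof -
  have "(\<Sum>p\<in>grid N0. Fi Ui (heat_exp N0 t u p)) \<le>
        (\<Sum>p\<in>grid N0. \<Sum>q\<in>grid N0. heat_exp N0 t (dl q) p * Fi Ui (u q))"
  proof (rule sum_mono)
    fix p assume p: "p \<in> grid N0"
    have "Fi Ui (\<Sum>q\<in>grid N0. heat_exp N0 t (dl q) p *\<^sub>R u q) \<le> (\<Sum>q\<in>grid N0. heat_exp N0 t (dl q) p * Fi Ui (u q))"
      by (rule convex_on_sum[OF finite_grid grid_ne[OF N0] Fi_convex]) (use E_row[OF t p] E_nonneg[OF t p] pos in auto)
    then show "Fi Ui (heat_exp N0 t u p) \<le> (\<Sum>q\<in>grid N0. heat_exp N0 t (dl q) p * Fi Ui (u q))"
      using heat_kernel[OF t p, of u] by (simp add: mult.commute)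
  qed
  also have "\<dots> = (\<Sum>q\<in>grid N0. Fi Ui (u q) * (\<Sum>p\<in>grid N0. heat_exp N0 t (dl q) p))"
    by (subst sum.swap) (simp add: sum_distrib_left mult.commute)
  also have "\<dots> = (\<Sum>q\<in>grid N0. Fi Ui (u q))"
    using E_col[OF t] by simp
  finally show ?thesis .
qed

lemma heat_pos:
  assumes t: "t \<ge> 0" and p: "p \<in> grid N0" and pos: "\<forall>q\<in>grid N0. u q > 0"
  shows "heat_exp N0 t u p > 0"
proof -
  have "heat_exp N0 t u p \<ge> exp (- cc N0 * t) * u p"
    by (rule heat_lower[OF t p]) (use pos in \<open>auto intro: less_imp_le\<close>)
  moreover have "exp (- cc N0 * t) * u p > 0" using pos p by simp
  ultimately show ?thesis by linarith
qed



lemma diff_exists: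
  assumes N0: "N0 \<ge> 1" and tau: "\<tau> > 0" and Dpos: "\<forall>\<rho>>0. Di \<rho> > 0"
    and pos: "\<forall>p\<in>grid N0. \<rho>n p > 0"
  shows "\<exists>\<rho>1. diffusion_step N0 Di Ui \<tau> \<rho>n \<rho>1"
proof (cases "diff_const Di")
  case True
  then show ?thesis unfolding diffusion_step_def by auto
next
  case False
  then show ?thesis unfolding diffusion_step_def using nl_exists[OF N0 tau Dpos pos] by auto
qed

lemma diff_props:
  assumes N0: "N0 \<ge> 1" and tau: "\<tau> > 0" and Dpos: "\<forall>\<rho>>0. Di \<rho> > 0"
    and pos: "\<forall>p\<in>grid N0. \<rho>n p > 0" and st: "diffusion_step N0 Di Ui \<tau> \<rho>n \<rho>1"
  shows "\<forall>p\<in>grid N0. \<rho>1 p > 0"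
    and "(\<Sum>p\<in>grid N0. Fi Ui (\<rho>1 p)) \<le> (\<Sum>p\<in>grid N0. Fi Ui (\<rho>n p))"
proof -
  have "(\<forall>p\<in>grid N0. \<rho>1 p > 0) \<and> (\<Sum>p\<in>grid N0. Fi Ui (\<rho>1 p)) \<le> (\<Sum>p\<in>grid N0. Fi Ui (\<rho>n p))"
  proof (cases "diff_const Di")
    case True
    then have eq: "\<forall>p\<in>grid N0. \<rho>1 p = heat_exp N0 (Di 1 * \<tau>) \<rho>n p" using st by (simp add: diffusion_step_def)
    have t: "Di 1 * \<tau> \<ge> 0" using Dpos tau by (simp add: less_imp_le)
    have "(\<Sum>p\<in>grid N0. Fi Ui (\<rho>1 p)) = (\<Sum>p\<in>grid N0. Fi Ui (heat_exp N0 (Di 1 * \<tau>) \<rho>n p))"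
      using eq by simp
    then show ?thesis using heat_energy[OF t N0 pos, of Ui] heat_pos[OF t _ pos] eq by auto
  next
    case False
    then have d: "diffusion_nl N0 Di Ui \<tau> \<rho>n \<rho>1" using st by (simp add: diffusion_step_def)
    then show ?thesis using nl_energy[OF tau Dpos pos d] unfolding diffusion_nl_def Let_def by blast
  qed
  then show "\<forall>p\<in>grid N0. \<rho>1 p > 0" and "(\<Sum>p\<in>grid N0. Fi Ui (\<rho>1 p)) \<le> (\<Sum>p\<in>grid N0. Fi Ui (\<rho>n p))"
    by auto
qed

lemma diff_unique:
  assumes tau: "\<tau> > 0" and Dpos: "\<forall>\<rho>>0. Di \<rho> > 0"
    and pos: "\<forall>p\<in>grid N0. \<rho>n p > 0" and agree: "\<forall>p\<in>grid N0. \<rho>n' p = \<rho>n p"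
    and s1: "diffusion_step N0 Di Ui \<tau> \<rho>n \<rho>1" and s2: "diffusion_step N0 Di Ui \<tau> \<rho>n' \<rho>1'"
  shows "\<forall>p\<in>grid N0. \<rho>1 p = \<rho>1' p"
proof (cases "diff_const Di")
  case True
  then show ?thesis using s1 s2 heat_loc[of _ N0 \<rho>n \<rho>n'] agree by (simp add: diffusion_step_def)
next
  case False
  then show ?thesis using s1 s2 nl_unique[OF tau Dpos pos agree] by (simp add: diffusion_step_def)
qed



context
  fixes N r :: nat and \<alpha> \<beta> U :: "nat \<Rightarrow> real" and k1m :: real
  assumes r1: "1 \<le> r" and rN: "r < N"
    and \<alpha>: "\<forall>i\<in>{1..r}. \<alpha> i > 0" and \<beta>: "\<forall>i\<in>{r+1..N}. \<beta> i > 0"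
    and k1m: "k1m > 0"
begin

abbreviation "\<sigma> \<equiv> sig r \<alpha> \<beta>"

lemma sig_lo: "i \<in> {1..r} \<Longrightarrow> \<sigma> i = - \<alpha> i \<and> \<sigma> i < 0"
  using \<alpha> by (auto simp: sig_def)

lemma sig_hi: "i \<in> {r+1..N} \<Longrightarrow> \<sigma> i = \<beta> i \<and> \<sigma> i > 0"
  using \<beta> by (auto simp: sig_def)

definition Tm :: "(nat \<Rightarrow> real) \<Rightarrow> real \<Rightarrow> nat \<Rightarrow> real" where
  "Tm c0 R i = \<sigma> i * (ln (c0 i + \<sigma> i * R) + U i)"

definition Fp :: "(nat \<Rightarrow> real) \<Rightarrow> real \<Rightarrow> real" where
  "Fp c0 R = (\<Sum>i=1..N. Tm c0 R i)"

lemma Tm_mono: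
  assumes "c0 i + \<sigma> i * R1 > 0" "c0 i + \<sigma> i * R2 > 0" "R1 \<le> R2"
  shows "Tm c0 R1 i \<le> Tm c0 R2 i"
proof (cases "\<sigma> i \<ge> 0")
  case True
  then have "c0 i + \<sigma> i * R1 \<le> c0 i + \<sigma> i * R2" using assms(3) by (simp add: mult_left_mono)
  then have "ln (c0 i + \<sigma> i * R1) \<le> ln (c0 i + \<sigma> i * R2)" using assms by simp
  then show ?thesis unfolding Tm_def using True by (intro mult_left_mono) auto
next
  case False
  then have "c0 i + \<sigma> i * R2 \<le> c0 i + \<sigma> i * R1" using assms(3) by (simp add: mult_left_mono_neg)
  then have "ln (c0 i + \<sigma> i * R2) \<le> ln (c0 i + \<sigma> i * R1)" using assms by simp
  then show ?thesis unfolding Tm_def using False by (intro mult_left_mono_neg) auto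
qed

lemma posR_iff: "posR N r \<alpha> \<beta> c0 R \<longleftrightarrow> (\<forall>i\<in>{1..N}. c0 i + \<sigma> i * R > 0)"
  by (simp add: posR_def cR_def)

lemma Fp_mono: "posR N r \<alpha> \<beta> c0 R1 \<Longrightarrow> posR N r \<alpha> \<beta> c0 R2 \<Longrightarrow> R1 \<le> R2 \<Longrightarrow> Fp c0 R1 \<le> Fp c0 R2"
  unfolding Fp_def posR_iff by (intro sum_mono Tm_mono) auto

lemma posR_convex: "posR N r \<alpha> \<beta> c0 x \<Longrightarrow> posR N r \<alpha> \<beta> c0 y \<Longrightarrow> x \<le> z \<Longrightarrow> z \<le> y \<Longrightarrow> posR N r \<alpha> \<beta> c0 z"
  unfolding posR_iff
proof (intro ballI)
  fix i assume x: "\<forall>i\<in>{1..N}. 0 < c0 i + \<sigma> i * x" and y: "\<forall>i\<in>{1..N}. 0 < c0 i + \<sigma> i * y"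
    and xz: "x \<le> z" and zy: "z \<le> y" and i: "i \<in> {1..N}"
  show "0 < c0 i + \<sigma> i * z"
  proof (cases "\<sigma> i \<ge> 0")
    case True
    then have "\<sigma> i * x \<le> \<sigma> i * z" using xz by (simp add: mult_left_mono)
    then show ?thesis using x i by force
  next
    case False
    then have "\<sigma> i * y \<le> \<sigma> i * z" using zy by (simp add: mult_left_mono_neg)
    then show ?thesis using y i by force
  qed
qed

lemma posR_0: "(\<forall>i\<in>{1..N}. c0 i > 0) \<Longrightarrow> posR N r \<alpha> \<beta> c0 0"
  by (simp add: posR_iff)

lemma left_point:
  assumes c0: "\<forall>i\<in>{1..N}. c0 i > 0" and \<kappa>: "\<kappa> > 0" and \<theta>: "\<theta> > 0"
  shows "\<exists>x. posR N r \<alpha> \<beta> c0 x \<and> - \<kappa> < x \<and> x \<le> 0 \<and> ln (x / \<kappa> + 1) + \<theta> * Fp c0 x + E < 0"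
proof -
  define P where "P = {r+1..N}"
  have Pne: "P \<noteq> {}" and Pfin: "finite P" using rN by (auto simp: P_def)
  define Rlo where "Rlo = Max ((\<lambda>i. - c0 i / \<beta> i) ` P)"
  have Rlo_ge: "- c0 i / \<beta> i \<le> Rlo" if "i \<in> P" for i
    unfolding Rlo_def using that Pfin by auto
  have "Rlo \<in> (\<lambda>i. - c0 i / \<beta> i) ` P" unfolding Rlo_def using Pne Pfin by (intro Max_in) auto
  then obtain j where j: "j \<in> P" "Rlo = - c0 j / \<beta> j" by auto
  have jN: "j \<in> {1..N}" using j r1 by (auto simp: P_def)
  have bj: "\<beta> j > 0" "\<sigma> j = \<beta> j" using sig_hi[of j] j by (auto simp: P_def)
  have Rlo_neg: "Rlo < 0" using j c0 jN bj by (simp add: divide_pos_pos)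
  have pos_of: "posR N r \<alpha> \<beta> c0 x" if "Rlo < x" "x \<le> 0" for x
    unfolding posR_iff
  proof
    fix i assume i: "i \<in> {1..N}"
    show "0 < c0 i + \<sigma> i * x"
    proof (cases "i \<le> r")
      case True
      then have "\<sigma> i < 0" using sig_lo[of i] i by auto
      then have "\<sigma> i * x \<ge> 0" using that by (simp add: mult_nonpos_nonpos)
      then show ?thesis using c0 i by (simp add: add_pos_nonneg)
    next
      case False
      then have iP: "i \<in> P" using i by (auto simp: P_def)
      then have s: "\<sigma> i = \<beta> i" "\<beta> i > 0" using sig_hi[of i] by (auto simp: P_def)
      have "- c0 i / \<beta> i < x" using Rlo_ge[OF iP] that by simp
      then have "- c0 i < x * \<beta> i" using s by (simp add: field_simps)
      then show ?thesis using s by (simp add: algebra_simps)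
    qed
  qed
  define F0 where "F0 = Fp c0 0"
  have Fp_le: "Fp c0 x \<le> F0" if "Rlo < x" "x \<le> 0" for x
    unfolding F0_def using Fp_mono[OF pos_of[OF that] posR_0[OF c0] that(2)] .
  show ?thesis
  proof (cases "Rlo \<le> - \<kappa>")
    case True
    define K where "K = \<bar>\<theta> * F0 + E\<bar> + 1"
    define x where "x = \<kappa> * (exp (- K) - 1)"
    have e1: "exp (- K) < 1" by (simp add: K_def)
    have x0: "x < 0" using \<kappa> e1 by (simp add: x_def mult_pos_neg)
    have xk: "- \<kappa> < x" using \<kappa> by (simp add: x_def algebra_simps)
    have lnx: "ln (x / \<kappa> + 1) = - K" using \<kappa> by (simp add: x_def)
    have xR: "Rlo < x" using True xk by simp
    have "\<theta> * Fp c0 x \<le> \<theta> * F0" using Fp_le[OF xR] x0 \<theta> by (simp add: mult_left_mono)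
    then have "ln (x / \<kappa> + 1) + \<theta> * Fp c0 x + E < 0" unfolding lnx K_def by linarith
    then show ?thesis using pos_of[OF xR] x0 xk by (intro exI[of _ x]) auto
  next
    case False
    define Cj where "Cj = F0 - Tm c0 0 j"
    define K where "K = \<bar>\<theta> * \<beta> j * U j + \<theta> * Cj + E\<bar> + 1"
    define \<epsilon> where "\<epsilon> = min (c0 j) (exp (- K / (\<theta> * \<beta> j)))"
    have \<epsilon>0: "\<epsilon> > 0" using c0 jN by (simp add: \<epsilon>_def)
    have \<epsilon>c: "\<epsilon> \<le> c0 j" by (simp add: \<epsilon>_def)
    have ln\<epsilon>: "ln \<epsilon> \<le> - K / (\<theta> * \<beta> j)"
    proof -
      have "\<epsilon> \<le> exp (- K / (\<theta> * \<beta> j))" by (simp add: \<epsilon>_def)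
      then have "ln \<epsilon> \<le> ln (exp (- K / (\<theta> * \<beta> j)))" using \<epsilon>0 by (subst ln_le_cancel_iff) auto
      then show ?thesis by simp
    qed
    define x where "x = (\<epsilon> - c0 j) / \<beta> j"
    have x0: "x \<le> 0" using \<epsilon>c bj by (simp add: x_def divide_nonpos_pos)
    have cjx: "c0 j + \<sigma> j * x = \<epsilon>" using bj by (simp add: x_def)
    have xR: "Rlo < x" using j \<epsilon>0 bj by (simp add: x_def field_simps)
    have xk: "- \<kappa> < x" using False xR by simp
    have px: "posR N r \<alpha> \<beta> c0 x" using pos_of[OF xR x0] .
    have split: "Fp c0 x = Tm c0 x j + (\<Sum>i\<in>{1..N} - {j}. Tm c0 x i)"
      unfolding Fp_def using jN by (simp add: sum.remove)
    have rest: "(\<Sum>i\<in>{1..N} - {j}. Tm c0 x i) \<le> Cj"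
    proof -
      have "(\<Sum>i\<in>{1..N} - {j}. Tm c0 x i) \<le> (\<Sum>i\<in>{1..N} - {j}. Tm c0 0 i)"
        using px posR_0[OF c0] x0 unfolding posR_iff by (intro sum_mono Tm_mono) auto
      also have "\<dots> = Cj" unfolding Cj_def F0_def Fp_def using jN by (simp add: sum.remove)
      finally show ?thesis .
    qed
    have Tj: "Tm c0 x j = \<beta> j * ln \<epsilon> + \<beta> j * U j" unfolding Tm_def cjx using bj by (simp add: algebra_simps)
    have "\<theta> * (\<beta> j * ln \<epsilon>) \<le> \<theta> * (\<beta> j * (- K / (\<theta> * \<beta> j)))"
      using ln\<epsilon> \<theta> bj by (intro mult_left_mono) auto
    then have tb: "\<theta> * (\<beta> j * ln \<epsilon>) \<le> - K" using \<theta> bj by simp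
    have lnle: "ln (x / \<kappa> + 1) \<le> 0"
    proof -
      have "x / \<kappa> + 1 \<le> 1" using x0 \<kappa> by (simp add: divide_nonpos_pos)
      moreover have "x / \<kappa> + 1 > 0" using xk \<kappa> by (simp add: field_simps)
      ultimately show ?thesis by simp
    qed
    have "\<theta> * Fp c0 x \<le> \<theta> * (\<beta> j * ln \<epsilon>) + \<theta> * (\<beta> j * U j) + \<theta> * Cj"
      using rest \<theta> unfolding split Tj by (simp add: algebra_simps)
    then have "ln (x / \<kappa> + 1) + \<theta> * Fp c0 x + E < 0" using tb lnle unfolding K_def by linarith
    then show ?thesis using px x0 xk by (intro exI[of _ x]) auto
  qed
qed

lemma right_point:
  assumes c0: "\<forall>i\<in>{1..N}. c0 i > 0" and \<kappa>: "\<kappa> > 0" and \<theta>: "\<theta> > 0"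
  shows "\<exists>x. posR N r \<alpha> \<beta> c0 x \<and> 0 \<le> x \<and> ln (x / \<kappa> + 1) + \<theta> * Fp c0 x + E > 0"
proof -
  define P where "P = {1..r}"
  have Pne: "P \<noteq> {}" and Pfin: "finite P" using r1 by (auto simp: P_def)
  define Rhi where "Rhi = Min ((\<lambda>i. c0 i / \<alpha> i) ` P)"
  have Rhi_le: "Rhi \<le> c0 i / \<alpha> i" if "i \<in> P" for i
    unfolding Rhi_def using that Pfin by auto
  have "Rhi \<in> (\<lambda>i. c0 i / \<alpha> i) ` P" unfolding Rhi_def using Pne Pfin by (intro Min_in) auto
  then obtain j where j: "j \<in> P" "Rhi = c0 j / \<alpha> j" by auto
  have jN: "j \<in> {1..N}" using j rN by (auto simp: P_def)
  have aj: "\<alpha> j > 0" "\<sigma> j = - \<alpha> j" using sig_lo[of j] j \<alpha> by (auto simp: P_def)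
  have pos_of: "posR N r \<alpha> \<beta> c0 x" if "x < Rhi" "0 \<le> x" for x
    unfolding posR_iff
  proof
    fix i assume i: "i \<in> {1..N}"
    show "0 < c0 i + \<sigma> i * x"
    proof (cases "i \<le> r")
      case False
      then have "\<sigma> i > 0" using sig_hi[of i] i by auto
      then have "\<sigma> i * x \<ge> 0" using that by simp
      then show ?thesis using c0 i by (simp add: add_pos_nonneg)
    next
      case True
      then have iP: "i \<in> P" using i by (auto simp: P_def)
      then have s: "\<sigma> i = - \<alpha> i" "\<alpha> i > 0" using sig_lo[of i] \<alpha> by (auto simp: P_def)
      have "x < c0 i / \<alpha> i" using Rhi_le[OF iP] that by simp
      then have "x * \<alpha> i < c0 i" using s by (simp add: field_simps)
      then show ?thesis using s by (simp add: algebra_simps)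
    qed
  qed
  define F0 where "F0 = Fp c0 0"
  define Cj where "Cj = F0 - Tm c0 0 j"
  define K where "K = \<bar>\<theta> * (- \<alpha> j * U j) + \<theta> * Cj + E\<bar> + 1"
  define \<epsilon> where "\<epsilon> = min (c0 j) (exp (- K / (\<theta> * \<alpha> j)))"
  have \<epsilon>0: "\<epsilon> > 0" using c0 jN by (simp add: \<epsilon>_def)
  have \<epsilon>c: "\<epsilon> \<le> c0 j" by (simp add: \<epsilon>_def)
  have ln\<epsilon>: "ln \<epsilon> \<le> - K / (\<theta> * \<alpha> j)"
  proof -
    have "\<epsilon> \<le> exp (- K / (\<theta> * \<alpha> j))" by (simp add: \<epsilon>_def)
    then have "ln \<epsilon> \<le> ln (exp (- K / (\<theta> * \<alpha> j)))" using \<epsilon>0 by (subst ln_le_cancel_iff) auto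
    then show ?thesis by simp
  qed
  define x where "x = (c0 j - \<epsilon>) / \<alpha> j"
  have x0: "0 \<le> x" using \<epsilon>c aj by (simp add: x_def)
  have cjx: "c0 j + \<sigma> j * x = \<epsilon>" using aj by (simp add: x_def)
  have xR: "x < Rhi" using j \<epsilon>0 aj by (simp add: x_def field_simps)
  have px: "posR N r \<alpha> \<beta> c0 x" using pos_of[OF xR x0] .
  have split: "Fp c0 x = Tm c0 x j + (\<Sum>i\<in>{1..N} - {j}. Tm c0 x i)"
    unfolding Fp_def using jN by (simp add: sum.remove)
  have rest: "(\<Sum>i\<in>{1..N} - {j}. Tm c0 x i) \<ge> Cj"
  proof -
    have "(\<Sum>i\<in>{1..N} - {j}. Tm c0 0 i) \<le> (\<Sum>i\<in>{1..N} - {j}. Tm c0 x i)"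
      using px posR_0[OF c0] x0 unfolding posR_iff by (intro sum_mono Tm_mono) auto
    moreover have "(\<Sum>i\<in>{1..N} - {j}. Tm c0 0 i) = Cj" unfolding Cj_def F0_def Fp_def using jN by (simp add: sum.remove)
    ultimately show ?thesis by simp
  qed
  have Tj: "Tm c0 x j = - \<alpha> j * ln \<epsilon> + (- \<alpha> j * U j)" unfolding Tm_def cjx using aj by (simp add: algebra_simps)
  have "\<theta> * (\<alpha> j * ln \<epsilon>) \<le> \<theta> * (\<alpha> j * (- K / (\<theta> * \<alpha> j)))"
    using ln\<epsilon> \<theta> aj by (intro mult_left_mono) auto
  then have tb: "\<theta> * (\<alpha> j * ln \<epsilon>) \<le> - K" using \<theta> aj by simp
  have lnge: "ln (x / \<kappa> + 1) \<ge> 0" using x0 \<kappa> by simp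
  have "\<theta> * Fp c0 x \<ge> - (\<theta> * (\<alpha> j * ln \<epsilon>)) + \<theta> * (- \<alpha> j * U j) + \<theta> * Cj"
    using rest \<theta> unfolding split Tj by (simp add: algebra_simps)
  then have "ln (x / \<kappa> + 1) + \<theta> * Fp c0 x + E > 0" using tb lnge unfolding K_def by linarith
  then show ?thesis using px x0 by (intro exI[of _ x]) auto
qed

lemma FR_eq: "FR N r \<alpha> \<beta> U c0 R = (\<Sum>i=1..N. Fi (U i) (c0 i + \<sigma> i * R))"
  unfolding FR_def cR_def Fi_def by (simp add: mult.commute)

lemma FR_deriv:
  assumes "posR N r \<alpha> \<beta> c0 R"
  shows "(FR N r \<alpha> \<beta> U c0 has_real_derivative Fp c0 R) (at R)"
proof -
  have "((\<lambda>R. \<Sum>i=1..N. Fi (U i) (c0 i + \<sigma> i * R)) has_real_derivative (\<Sum>i=1..N. Tm c0 R i)) (at R)"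
  proof (rule DERIV_sum)
    fix i assume i: "i \<in> {1..N}"
    have pos: "c0 i + \<sigma> i * R > 0" using assms i by (simp add: posR_iff)
    have "((\<lambda>R. c0 i + \<sigma> i * R) has_real_derivative \<sigma> i) (at R)"
      by (auto intro!: derivative_eq_intros)
    from DERIV_chain2[OF Fi_deriv[OF pos] this]
    show "((\<lambda>R. Fi (U i) (c0 i + \<sigma> i * R)) has_real_derivative Tm c0 R i) (at R)"
      by (simp add: Tm_def mult.commute)
  qed
  then show ?thesis unfolding FR_eq[abs_def] Fp_def by (simp add: fun_eq_iff)
qed

definition PS :: "(nat \<Rightarrow> real) \<Rightarrow> real set" where "PS c0 = {R. posR N r \<alpha> \<beta> c0 R}"

lemma PS_open: "open (PS c0)"
proof -
  have "PS c0 = (\<Inter>i\<in>{1..N}. {R. 0 < c0 i + \<sigma> i * R})"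
    by (auto simp: PS_def posR_iff)
  moreover have "open {R. 0 < c0 i + \<sigma> i * R}" for i
    by (rule open_Collect_less) (auto intro!: continuous_intros)
  ultimately show ?thesis by (auto intro!: open_INT)
qed

lemma PS_conn: "connected (PS c0)"
  unfolding connected_iff_interval PS_def using posR_convex by blast

lemma Fp_cont: "continuous_on S (Fp c0)" if "S \<subseteq> PS c0"
  unfolding Fp_def Tm_def
proof (intro continuous_intros)
  have "\<forall>x\<in>S. \<forall>i\<in>{1..N}. 0 < c0 i + \<sigma> i * x" using that by (auto simp: PS_def posR_iff)
  then show "\<And>i. i \<in> {1..N} \<Longrightarrow> \<forall>x\<in>S. c0 i + \<sigma> i * x \<noteq> 0" by fastforce
qed

lemma phiR_slope:
  assumes "posR N r \<alpha> \<beta> c0 0"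
  shows "phiR N r \<alpha> \<beta> U c0 R 0 = slope (FR N r \<alpha> \<beta> U c0) (Fp c0 0) 0 R"
  unfolding phiR_def slope_def using DERIV_imp_deriv[OF FR_deriv[OF assms]] by auto

lemma phiR_mono:
  assumes c0: "posR N r \<alpha> \<beta> c0 0" and "posR N r \<alpha> \<beta> c0 y" "posR N r \<alpha> \<beta> c0 z" "y \<le> z"
  shows "phiR N r \<alpha> \<beta> U c0 y 0 \<le> phiR N r \<alpha> \<beta> U c0 z 0"
  unfolding phiR_slope[OF c0]
  by (rule secant_mono[OF PS_open PS_conn, where f'="Fp c0"])
     (use assms FR_deriv Fp_mono in \<open>auto simp: PS_def\<close>)

lemma phiR_0: "posR N r \<alpha> \<beta> c0 0 \<Longrightarrow> phiR N r \<alpha> \<beta> U c0 0 0 = Fp c0 0"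
  by (simp add: phiR_slope slope_def)

lemma phiR_cont:
  assumes c0: "posR N r \<alpha> \<beta> c0 0" and S: "S \<subseteq> PS c0"
  shows "continuous_on S (\<lambda>R. phiR N r \<alpha> \<beta> U c0 R 0)"
proof -
  have "continuous_on (PS c0) (slope (FR N r \<alpha> \<beta> U c0) (Fp c0 0) 0)"
    by (rule secant_cont[OF PS_open]) (use FR_deriv c0 in \<open>auto simp: PS_def\<close>)
  then show ?thesis using S continuous_on_subset by (simp add: phiR_slope[OF c0])
qed

lemma sum_sig_mu: "(\<Sum>i=1..N. \<sigma> i * muR r \<alpha> \<beta> U c0 R i) = Fp c0 R"
  unfolding Fp_def Tm_def muR_def cR_def by simp

lemma eta_pos: "(\<forall>i\<in>{r+1..N}. c i > 0) \<Longrightarrow> eta N r \<beta> k1m c > 0"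
  unfolding eta_def using k1m by (auto intro!: prod_pos mult_pos_pos)

lemma pos_hi: "\<forall>i\<in>{1..N}. c0 i > 0 \<Longrightarrow> \<forall>i\<in>{r+1..N}. c0 i > 0"
  using r1 by auto

lemma frac_pos: "(\<kappa>::real) > 0 \<Longrightarrow> (x / \<kappa> + 1 > 0) = (x > - \<kappa>)"
proof -
  assume k: "\<kappa> > 0"
  have "x / \<kappa> + 1 = (x + \<kappa>) / \<kappa>" using k by (simp add: field_simps)
  moreover have "(0 < x + \<kappa>) = (- \<kappa> < x)" by linarith
  ultimately show ?thesis using k by (simp add: zero_less_divide_iff)
qed

lemma pred_iff:
  assumes c0: "\<forall>i\<in>{1..N}. c0 i > 0" and tau: "\<tau> > 0"
  shows "predictor N r \<alpha> \<beta> U k1m \<tau> c0 Rh \<longleftrightarrow>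
    posR N r \<alpha> \<beta> c0 Rh \<and> Rh > - (eta N r \<beta> k1m c0 * \<tau>) \<and>
    ln (Rh / (eta N r \<beta> k1m c0 * \<tau>) + 1) + Fp c0 Rh = 0"
proof -
  have k: "eta N r \<beta> k1m c0 * \<tau> > 0" using eta_pos[OF pos_hi[OF c0]] tau by simp
  have "Rh / (eta N r \<beta> k1m c0 * \<tau>) + 1 > 0 \<longleftrightarrow> Rh > - (eta N r \<beta> k1m c0 * \<tau>)"
    using frac_pos[OF k] .
  then show ?thesis unfolding predictor_def sum_sig_mu by auto
qed

lemma sum_sig_mu_diff: "(\<Sum>i=1..N. \<sigma> i * (muR r \<alpha> \<beta> U c0 R i - muR r \<alpha> \<beta> U c0 0 i)) = Fp c0 R - Fp c0 0"
  by (simp only: right_diff_distrib sum_subtractf sum_sig_mu)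

lemma corr_iff:
  assumes "eta N r \<beta> k1m (cR r \<alpha> \<beta> c0 (Rh / 2)) * \<tau> > 0"
  shows "corrector N r \<alpha> \<beta> U k1m \<tau> c0 Rh R \<longleftrightarrow>
    posR N r \<alpha> \<beta> c0 R \<and> R > - (eta N r \<beta> k1m (cR r \<alpha> \<beta> c0 (Rh / 2)) * \<tau>) \<and>
    ln (R / (eta N r \<beta> k1m (cR r \<alpha> \<beta> c0 (Rh / 2)) * \<tau>) + 1) + phiR N r \<alpha> \<beta> U c0 R 0
      + \<tau> * (Fp c0 R - Fp c0 0) = 0"
  unfolding corrector_def Let_def sum_sig_mu_diff by auto

lemma eta_half_pos:
  assumes c0: "\<forall>i\<in>{1..N}. c0 i > 0" and p: "posR N r \<alpha> \<beta> c0 Rh"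
  shows "eta N r \<beta> k1m (cR r \<alpha> \<beta> c0 (Rh / 2)) > 0"
proof (rule eta_pos, rule ballI)
  fix i assume i: "i \<in> {r+1..N}"
  then have iN: "i \<in> {1..N}" using r1 by auto
  have h1: "c0 i + \<sigma> i * Rh > 0" using p iN by (simp add: posR_iff)
  have h2: "cR r \<alpha> \<beta> c0 (Rh / 2) i = c0 i + \<sigma> i * Rh / 2" by (simp add: cR_def)
  have h3: "c0 i > 0" using c0 iN by auto
  have "c0 i + \<sigma> i * Rh / 2 = (c0 i + (c0 i + \<sigma> i * Rh)) / 2" by (simp add: field_simps)
  also have "\<dots> > 0" using h1 h3 by simp
  finally show "cR r \<alpha> \<beta> c0 (Rh / 2) i > 0" using h2 by simp
qed

lemma ln_strict: assumes k: "(\<kappa>::real) > 0" and x: "x > - \<kappa>" and xy: "x < y"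
  shows "ln (x / \<kappa> + 1) < ln (y / \<kappa> + 1)"
proof -
  have "x / \<kappa> + 1 > 0" using frac_pos[OF k] x by simp
  moreover have "x / \<kappa> < y / \<kappa>" using k xy by (simp add: divide_strict_right_mono)
  ultimately show ?thesis by simp
qed

lemma cont_ln_part: assumes k: "(\<kappa>::real) > 0" and S: "S \<subseteq> {- \<kappa><..}"
  shows "continuous_on S (\<lambda>x. ln (x / \<kappa> + 1))"
proof (intro continuous_intros)
  show "\<forall>x\<in>S. x / \<kappa> + 1 \<noteq> 0"
  proof
    fix x assume "x \<in> S"
    then have "x > - \<kappa>" using S by auto
    then show "x / \<kappa> + 1 \<noteq> 0" using frac_pos[OF k, of x] by simp
  qed
  show "\<forall>x\<in>S. \<kappa> \<noteq> 0" using k by simp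
qed

lemma pred_exists:
  assumes c0: "\<forall>i\<in>{1..N}. c0 i > 0" and tau: "\<tau> > 0"
  shows "\<exists>Rh. predictor N r \<alpha> \<beta> U k1m \<tau> c0 Rh"
proof -
  define \<kappa> where "\<kappa> = eta N r \<beta> k1m c0 * \<tau>"
  have k: "\<kappa> > 0" using eta_pos[OF pos_hi[OF c0]] tau by (simp add: \<kappa>_def)
  define G where "G = (\<lambda>x. ln (x / \<kappa> + 1) + 1 * Fp c0 x + 0)"
  obtain a where a: "posR N r \<alpha> \<beta> c0 a" "- \<kappa> < a" "a \<le> 0" "G a < 0"
    using left_point[OF c0 k, of 1 0] by (auto simp: G_def)
  obtain b where b: "posR N r \<alpha> \<beta> c0 b" "0 \<le> b" "G b > 0"
    using right_point[OF c0 k, of 1 0] by (auto simp: G_def)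
  have sub: "{a..b} \<subseteq> PS c0" "{a..b} \<subseteq> {-\<kappa><..}"
    using posR_convex[OF a(1) b(1)] a(2) by (auto simp: PS_def)
  have "continuous_on {a..b} G"
    unfolding G_def by (intro continuous_intros cont_ln_part[OF k sub(2)] Fp_cont[OF sub(1)])
  then obtain z where z: "a \<le> z" "z \<le> b" "G z = 0"
    using IVT'[of G a 0 b] a b by auto
  have "predictor N r \<alpha> \<beta> U k1m \<tau> c0 z"
    unfolding pred_iff[OF c0 tau] \<kappa>_def[symmetric]
    using z sub a(2) G_def by (auto simp: PS_def)
  then show ?thesis by blast
qed

lemma pred_unique:
  assumes c0: "\<forall>i\<in>{1..N}. c0 i > 0" and tau: "\<tau> > 0"
    and p1: "predictor N r \<alpha> \<beta> U k1m \<tau> c0 R1" and p2: "predictor N r \<alpha> \<beta> U k1m \<tau> c0 R2"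
  shows "R1 = R2"
proof -
  define \<kappa> where "\<kappa> = eta N r \<beta> k1m c0 * \<tau>"
  have k: "\<kappa> > 0" using eta_pos[OF pos_hi[OF c0]] tau by (simp add: \<kappa>_def)
  have h1: "posR N r \<alpha> \<beta> c0 R1" "R1 > - \<kappa>" "ln (R1 / \<kappa> + 1) + Fp c0 R1 = 0"
    using p1 unfolding pred_iff[OF c0 tau] \<kappa>_def by auto
  have h2: "posR N r \<alpha> \<beta> c0 R2" "R2 > - \<kappa>" "ln (R2 / \<kappa> + 1) + Fp c0 R2 = 0"
    using p2 unfolding pred_iff[OF c0 tau] \<kappa>_def by auto
  have False if "x < y" "posR N r \<alpha> \<beta> c0 x" "posR N r \<alpha> \<beta> c0 y" "x > - \<kappa>"
     "ln (x / \<kappa> + 1) + Fp c0 x = 0" "ln (y / \<kappa> + 1) + Fp c0 y = 0" for x y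
    using ln_strict[OF k that(4) that(1)] Fp_mono[OF that(2,3)] that(1,5,6) by fastforce
  then show ?thesis using h1 h2 by (cases R1 R2 rule: linorder_cases) blast+
qed

lemma corr_exists:
  assumes c0: "\<forall>i\<in>{1..N}. c0 i > 0" and tau: "\<tau> > 0" and k: "\<kappa> > 0"
    and kdef: "\<kappa> = eta N r \<beta> k1m (cR r \<alpha> \<beta> c0 (Rh / 2)) * \<tau>"
  shows "\<exists>R. corrector N r \<alpha> \<beta> U k1m \<tau> c0 Rh R"
proof -
  have p0: "posR N r \<alpha> \<beta> c0 0" by (rule posR_0[OF c0])
  define G where "G = (\<lambda>x. ln (x / \<kappa> + 1) + phiR N r \<alpha> \<beta> U c0 x 0 + \<tau> * (Fp c0 x - Fp c0 0))"
  obtain a where a: "posR N r \<alpha> \<beta> c0 a" "- \<kappa> < a" "a \<le> 0"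
     "ln (a / \<kappa> + 1) + \<tau> * Fp c0 a + (1 - \<tau>) * Fp c0 0 < 0"
    using left_point[OF c0 k tau, of "(1 - \<tau>) * Fp c0 0"] by auto
  have "phiR N r \<alpha> \<beta> U c0 a 0 \<le> Fp c0 0" using phiR_mono[OF p0 a(1) p0 a(3)] phiR_0[OF p0] by simp
  then have Ga: "G a < 0" using a(4) unfolding G_def by (simp add: algebra_simps)
  obtain b where b: "posR N r \<alpha> \<beta> c0 b" "0 \<le> b"
     "ln (b / \<kappa> + 1) + \<tau> * Fp c0 b + (1 - \<tau>) * Fp c0 0 > 0"
    using right_point[OF c0 k tau, of "(1 - \<tau>) * Fp c0 0"] by auto
  have "phiR N r \<alpha> \<beta> U c0 b 0 \<ge> Fp c0 0" using phiR_mono[OF p0 p0 b(1) b(2)] phiR_0[OF p0] by simp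
  then have Gb: "G b > 0" using b(3) unfolding G_def by (simp add: algebra_simps)
  have sub: "{a..b} \<subseteq> PS c0" "{a..b} \<subseteq> {-\<kappa><..}"
    using posR_convex[OF a(1) b(1)] a(2) by (auto simp: PS_def)
  have "continuous_on {a..b} G"
    unfolding G_def by (intro continuous_intros cont_ln_part[OF k sub(2)] Fp_cont[OF sub(1)] phiR_cont[OF p0 sub(1)])
  then obtain z where z: "a \<le> z" "z \<le> b" "G z = 0"
    using IVT'[of G a 0 b] Ga Gb a(3) b(2) by auto
  have "corrector N r \<alpha> \<beta> U k1m \<tau> c0 Rh z"
    unfolding corr_iff[OF k[unfolded kdef]] kdef[symmetric]
    using z sub a(2) G_def by (auto simp: PS_def)
  then show ?thesis by blast
qed

lemma corr_unique:
  assumes c0: "\<forall>i\<in>{1..N}. c0 i > 0" and tau: "\<tau> > 0" and k: "\<kappa> > 0"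
    and kdef: "\<kappa> = eta N r \<beta> k1m (cR r \<alpha> \<beta> c0 (Rh / 2)) * \<tau>"
    and p1: "corrector N r \<alpha> \<beta> U k1m \<tau> c0 Rh R1" and p2: "corrector N r \<alpha> \<beta> U k1m \<tau> c0 Rh R2"
  shows "R1 = R2"
proof -
  have p0: "posR N r \<alpha> \<beta> c0 0" by (rule posR_0[OF c0])
  define G where "G = (\<lambda>x. ln (x / \<kappa> + 1) + phiR N r \<alpha> \<beta> U c0 x 0 + \<tau> * (Fp c0 x - Fp c0 0))"
  have h1: "posR N r \<alpha> \<beta> c0 R1" "R1 > - \<kappa>" "G R1 = 0"
    using p1 unfolding corr_iff[OF k[unfolded kdef]] kdef[symmetric] G_def by auto
  have h2: "posR N r \<alpha> \<beta> c0 R2" "R2 > - \<kappa>" "G R2 = 0"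
    using p2 unfolding corr_iff[OF k[unfolded kdef]] kdef[symmetric] G_def by auto
  have False if "x < y" "posR N r \<alpha> \<beta> c0 x" "posR N r \<alpha> \<beta> c0 y" "x > - \<kappa>" "G x = 0" "G y = 0" for x y
  proof -
    have "ln (x / \<kappa> + 1) < ln (y / \<kappa> + 1)" by (rule ln_strict[OF k that(4) that(1)])
    moreover have "phiR N r \<alpha> \<beta> U c0 x 0 \<le> phiR N r \<alpha> \<beta> U c0 y 0"
      using phiR_mono[OF p0 that(2,3)] that(1) by simp
    moreover have "\<tau> * (Fp c0 x - Fp c0 0) \<le> \<tau> * (Fp c0 y - Fp c0 0)"
      using Fp_mono[OF that(2,3)] that(1) tau by simp
    ultimately have "G x < G y" unfolding G_def by linarith
    then show False using that by simp
  qed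
  then show ?thesis using h1 h2 by (cases R1 R2 rule: linorder_cases) blast+
qed

lemma corr_energy:
  assumes c0: "\<forall>i\<in>{1..N}. c0 i > 0" and tau: "\<tau> > 0" and k: "\<kappa> > 0"
    and kdef: "\<kappa> = eta N r \<beta> k1m (cR r \<alpha> \<beta> c0 (Rh / 2)) * \<tau>"
    and p: "corrector N r \<alpha> \<beta> U k1m \<tau> c0 Rh R"
  shows "FR N r \<alpha> \<beta> U c0 R \<le> FR N r \<alpha> \<beta> U c0 0"
proof (cases "R = 0")
  case True then show ?thesis by simp
next
  case False
  have p0: "posR N r \<alpha> \<beta> c0 0" by (rule posR_0[OF c0])
  have h: "posR N r \<alpha> \<beta> c0 R" "R > - \<kappa>"
    "ln (R / \<kappa> + 1) + phiR N r \<alpha> \<beta> U c0 R 0 + \<tau> * (Fp c0 R - Fp c0 0) = 0"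
    using p unfolding corr_iff[OF k[unfolded kdef]] kdef[symmetric] by auto
  have ph: "phiR N r \<alpha> \<beta> U c0 R 0 = (FR N r \<alpha> \<beta> U c0 R - FR N r \<alpha> \<beta> U c0 0) / R"
    using False by (simp add: phiR_def)
  have a1: "R * ln (R / \<kappa> + 1) \<ge> 0"
  proof (cases "R > 0")
    case True
    then have "ln (R / \<kappa> + 1) \<ge> 0" using k by simp
    then show ?thesis using True by simp
  next
    case F: False
    then have R0: "R < 0" using False by simp
    have "R / \<kappa> + 1 > 0" using frac_pos[OF k] h(2) by simp
    moreover have "R / \<kappa> + 1 \<le> 1" using R0 k by (simp add: divide_nonpos_pos)
    ultimately have "ln (R / \<kappa> + 1) \<le> 0" by simp
    then show ?thesis using R0 by (simp add: mult_nonpos_nonpos)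
  qed
  have a2: "R * (\<tau> * (Fp c0 R - Fp c0 0)) \<ge> 0"
  proof (cases "R > 0")
    case True
    then have "Fp c0 0 \<le> Fp c0 R" using Fp_mono[OF p0 h(1)] by simp
    then show ?thesis using True tau by simp
  next
    case F: False
    then have R0: "R < 0" using False by simp
    then have "Fp c0 R \<le> Fp c0 0" using Fp_mono[OF h(1) p0] by simp
    then have "\<tau> * (Fp c0 R - Fp c0 0) \<le> 0" using tau by (simp add: mult_nonneg_nonpos)
    then show ?thesis using R0 by (simp add: mult_nonpos_nonpos)
  qed
  have "FR N r \<alpha> \<beta> U c0 R - FR N r \<alpha> \<beta> U c0 0 = R * phiR N r \<alpha> \<beta> U c0 R 0"
    using False ph by simp
  also have "\<dots> = - (R * ln (R / \<kappa> + 1)) - R * (\<tau> * (Fp c0 R - Fp c0 0))"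
  proof -
    have phi_eq: "phiR N r \<alpha> \<beta> U c0 R 0 = - ln (R / \<kappa> + 1) - \<tau> * (Fp c0 R - Fp c0 0)"
      using h(3) by linarith
    show ?thesis unfolding phi_eq by (simp add: right_diff_distrib)
  qed
  finally show ?thesis using a1 a2 by linarith
qed

lemma react_exists:
  assumes c0: "\<forall>i\<in>{1..N}. c0 i > 0" and tau: "\<tau> > 0"
  shows "\<exists>c1. reaction_step N r \<alpha> \<beta> U k1m \<tau> c0 c1"
proof -
  obtain Rh where ph: "predictor N r \<alpha> \<beta> U k1m \<tau> c0 Rh" using pred_exists[OF c0 tau] by blast
  have pRh: "posR N r \<alpha> \<beta> c0 Rh" using ph unfolding pred_iff[OF c0 tau] by auto
  define \<kappa> where "\<kappa> = eta N r \<beta> k1m (cR r \<alpha> \<beta> c0 (Rh / 2)) * \<tau>"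
  have k: "\<kappa> > 0" using eta_half_pos[OF c0 pRh] tau by (simp add: \<kappa>_def)
  obtain R where pc: "corrector N r \<alpha> \<beta> U k1m \<tau> c0 Rh R" using corr_exists[OF c0 tau k \<kappa>_def] by blast
  show ?thesis unfolding reaction_step_def using ph pc by (intro exI[of _ "\<lambda>i. c0 i + \<sigma> i * R"]) blast
qed

lemma react_props:
  assumes c0: "\<forall>i\<in>{1..N}. c0 i > 0" and tau: "\<tau> > 0" and st: "reaction_step N r \<alpha> \<beta> U k1m \<tau> c0 c1"
  shows "\<forall>i\<in>{1..N}. c1 i > 0"
    and "(\<Sum>i=1..N. Fi (U i) (c1 i)) \<le> (\<Sum>i=1..N. Fi (U i) (c0 i))"
proof -
  obtain Rh R where ph: "predictor N r \<alpha> \<beta> U k1m \<tau> c0 Rh" and pc: "corrector N r \<alpha> \<beta> U k1m \<tau> c0 Rh R"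
    and c1: "\<forall>i\<in>{1..N}. c1 i = c0 i + \<sigma> i * R"
    using st unfolding reaction_step_def by blast
  have pRh: "posR N r \<alpha> \<beta> c0 Rh" using ph unfolding pred_iff[OF c0 tau] by auto
  define \<kappa> where "\<kappa> = eta N r \<beta> k1m (cR r \<alpha> \<beta> c0 (Rh / 2)) * \<tau>"
  have k: "\<kappa> > 0" using eta_half_pos[OF c0 pRh] tau by (simp add: \<kappa>_def)
  have pR: "posR N r \<alpha> \<beta> c0 R" using pc unfolding corr_iff[OF k[unfolded \<kappa>_def]] by auto
  then show "\<forall>i\<in>{1..N}. c1 i > 0" using c1 by (simp add: posR_iff)
  have "FR N r \<alpha> \<beta> U c0 R \<le> FR N r \<alpha> \<beta> U c0 0" by (rule corr_energy[OF c0 tau k \<kappa>_def pc])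
  moreover have "FR N r \<alpha> \<beta> U c0 R = (\<Sum>i=1..N. Fi (U i) (c1 i))"
    unfolding FR_eq using c1 by (intro sum.cong) auto
  moreover have "FR N r \<alpha> \<beta> U c0 0 = (\<Sum>i=1..N. Fi (U i) (c0 i))"
    unfolding FR_eq by simp
  ultimately show "(\<Sum>i=1..N. Fi (U i) (c1 i)) \<le> (\<Sum>i=1..N. Fi (U i) (c0 i))" by simp
qed

lemma react_cong:
  assumes agree: "\<forall>i\<in>{1..N}. c0' i = c0 i"
  shows "reaction_step N r \<alpha> \<beta> U k1m \<tau> c0' c1 \<longleftrightarrow> reaction_step N r \<alpha> \<beta> U k1m \<tau> c0 c1"
proof -
  have posRc: "posR N r \<alpha> \<beta> c0' R = posR N r \<alpha> \<beta> c0 R" for R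
    using agree by (simp add: posR_iff)
  have Fpc: "Fp c0' R = Fp c0 R" for R
    unfolding Fp_def Tm_def using agree by (intro sum.cong) auto
  have agree2: "\<forall>i\<in>{r+1..N}. c0' i = c0 i" using agree r1 by auto
  have etac: "eta N r \<beta> k1m c0' = eta N r \<beta> k1m c0"
  proof -
    have "(\<Prod>i\<in>{r+1..N}. c0' i powr \<beta> i) = (\<Prod>i\<in>{r+1..N}. c0 i powr \<beta> i)"
      using agree2 by (intro prod.cong) auto
    then show ?thesis unfolding eta_def by simp
  qed
  have etac2: "eta N r \<beta> k1m (cR r \<alpha> \<beta> c0' x) = eta N r \<beta> k1m (cR r \<alpha> \<beta> c0 x)" for x
  proof -
    have "(\<Prod>i\<in>{r+1..N}. cR r \<alpha> \<beta> c0' x i powr \<beta> i) = (\<Prod>i\<in>{r+1..N}. cR r \<alpha> \<beta> c0 x i powr \<beta> i)"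
      using agree2 by (intro prod.cong) (auto simp: cR_def)
    then show ?thesis unfolding eta_def by simp
  qed
  have FRc: "FR N r \<alpha> \<beta> U c0' = FR N r \<alpha> \<beta> U c0"
    unfolding FR_eq[abs_def] using agree by (intro ext sum.cong) auto
  have phic: "phiR N r \<alpha> \<beta> U c0' = phiR N r \<alpha> \<beta> U c0"
    unfolding phiR_def[abs_def] FRc ..
  have pc: "predictor N r \<alpha> \<beta> U k1m \<tau> c0' Rh = predictor N r \<alpha> \<beta> U k1m \<tau> c0 Rh" for Rh
    unfolding predictor_def sum_sig_mu posRc Fpc etac ..
  have cc: "corrector N r \<alpha> \<beta> U k1m \<tau> c0' Rh R = corrector N r \<alpha> \<beta> U k1m \<tau> c0 Rh R" for Rh R
    unfolding corrector_def Let_def sum_sig_mu_diff posRc Fpc etac2 phic ..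
  show ?thesis unfolding reaction_step_def pc cc using agree by auto
qed

lemma react_unique:
  assumes c0: "\<forall>i\<in>{1..N}. c0 i > 0" and tau: "\<tau> > 0"
    and s1: "reaction_step N r \<alpha> \<beta> U k1m \<tau> c0 c1" and s2: "reaction_step N r \<alpha> \<beta> U k1m \<tau> c0 c1'"
  shows "\<forall>i\<in>{1..N}. c1 i = c1' i"
proof -
  obtain Rh R where ph: "predictor N r \<alpha> \<beta> U k1m \<tau> c0 Rh" and pc: "corrector N r \<alpha> \<beta> U k1m \<tau> c0 Rh R"
    and c1: "\<forall>i\<in>{1..N}. c1 i = c0 i + \<sigma> i * R"
    using s1 unfolding reaction_step_def by blast
  obtain Rh' R' where ph': "predictor N r \<alpha> \<beta> U k1m \<tau> c0 Rh'" and pc': "corrector N r \<alpha> \<beta> U k1m \<tau> c0 Rh' R'"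
    and c1': "\<forall>i\<in>{1..N}. c1' i = c0 i + \<sigma> i * R'"
    using s2 unfolding reaction_step_def by blast
  have "Rh' = Rh" using pred_unique[OF c0 tau ph ph'] by simp
  have pRh: "posR N r \<alpha> \<beta> c0 Rh" using ph unfolding pred_iff[OF c0 tau] by auto
  define \<kappa> where "\<kappa> = eta N r \<beta> k1m (cR r \<alpha> \<beta> c0 (Rh / 2)) * \<tau>"
  have k: "\<kappa> > 0" using eta_half_pos[OF c0 pRh] tau by (simp add: \<kappa>_def)
  have "R = R'" using corr_unique[OF c0 tau k \<kappa>_def pc] pc' \<open>Rh' = Rh\<close> by simp
  then show ?thesis using c1 c1' by simp
qed

end


definition En :: "nat \<Rightarrow> nat \<Rightarrow> (nat \<Rightarrow> real) \<Rightarrow> (nat \<Rightarrow> gpt \<Rightarrow> real) \<Rightarrow> real" where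
  "En N N0 U c = (\<Sum>p\<in>grid N0. \<Sum>i=1..N. Fi (U i) (c i p))"

lemma energy_En: "energy_h N N0 U c = (1 / real N0) ^ 3 * En N N0 U c"
  unfolding energy_h_def En_def Fi_def by (simp add: mult.commute)

lemma energy_mono: "En N N0 U c' \<le> En N N0 U c \<Longrightarrow> energy_h N N0 U c' \<le> energy_h N N0 U c"
  unfolding energy_En by (intro mult_left_mono) auto

lemma react_out_cong: "reaction_step N r \<alpha> \<beta> U k1m \<tau> c0 c1 \<Longrightarrow> \<forall>i\<in>{1..N}. c1' i = c1 i \<Longrightarrow>
   reaction_step N r \<alpha> \<beta> U k1m \<tau> c0 c1'"
  unfolding reaction_step_def by auto

lemma step_main:
  fixes N r N0 :: nat and \<alpha> \<beta> U :: "nat \<Rightarrow> real" and k1m \<Delta>t :: real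
    and D :: "nat \<Rightarrow> real \<Rightarrow> real"
  assumes r1: "1 \<le> r" and rN: "r < N"
    and \<alpha>: "\<forall>i\<in>{1..r}. \<alpha> i > 0" and \<beta>: "\<forall>i\<in>{r+1..N}. \<beta> i > 0"
    and k1m: "k1m > 0" and dt: "\<Delta>t > 0" and N0: "N0 \<ge> 1"
    and Dpos: "\<forall>i\<in>{1..N}. \<forall>\<rho>>0. D i \<rho> > 0"
    and cn: "positive_state N N0 cn"
  shows "(\<exists>!cn1. splitting_step N r \<alpha> \<beta> U k1m D N0 \<Delta>t cn cn1) \<and>
            (\<forall>cn1. splitting_step N r \<alpha> \<beta> U k1m D N0 \<Delta>t cn cn1 \<longrightarrow>
                positive_state N N0 cn1 \<and> energy_h N N0 U cn1 \<le> energy_h N N0 U cn)"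
proof -
  note RE = react_exists[OF r1 rN \<alpha> \<beta> k1m]
  note RP = react_props[OF r1 rN \<alpha> \<beta> k1m]
  note RU = react_unique[OF r1 rN \<alpha> \<beta> k1m]
  note RC = react_cong[OF r1 rN \<alpha> \<beta> k1m]
  define \<tau> where "\<tau> = \<Delta>t / 2"
  have tau: "\<tau> > 0" using dt by (simp add: \<tau>_def)
  have cnp: "\<forall>i\<in>{1..N}. cn i p > 0" if "p \<in> grid N0" for p
    using cn that by (simp add: positive_state_def)
  have props: "positive_state N N0 cn1 \<and> En N N0 U cn1 \<le> En N N0 U cn \<and>
     (\<exists>c1 c2. (\<forall>p\<in>grid N0. \<forall>i\<in>{1..N}. c1 i p > 0) \<and> (\<forall>p\<in>grid N0. \<forall>i\<in>{1..N}. c2 i p > 0) \<and>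
        (\<forall>p\<in>grid N0. reaction_step N r \<alpha> \<beta> U k1m \<tau> (\<lambda>i. cn i p) (\<lambda>i. c1 i p)) \<and>
        (\<forall>i\<in>{1..N}. diffusion_step N0 (D i) (U i) \<Delta>t (c1 i) (c2 i)) \<and>
        (\<forall>p\<in>grid N0. reaction_step N r \<alpha> \<beta> U k1m \<tau> (\<lambda>i. c2 i p) (\<lambda>i. cn1 i p)))"
    if st: "splitting_step N r \<alpha> \<beta> U k1m D N0 \<Delta>t cn cn1" for cn1
  proof -
    obtain c1 c2 where
      s1: "\<forall>p\<in>grid N0. reaction_step N r \<alpha> \<beta> U k1m \<tau> (\<lambda>i. cn i p) (\<lambda>i. c1 i p)" and
      s2: "\<forall>i\<in>{1..N}. diffusion_step N0 (D i) (U i) \<Delta>t (c1 i) (c2 i)" and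
      s3: "\<forall>p\<in>grid N0. reaction_step N r \<alpha> \<beta> U k1m \<tau> (\<lambda>i. c2 i p) (\<lambda>i. cn1 i p)"
      using st unfolding splitting_step_def \<tau>_def by blast
    have c1p: "\<forall>p\<in>grid N0. \<forall>i\<in>{1..N}. c1 i p > 0" using RP(1)[OF cnp tau] s1 by blast
    have e1: "(\<Sum>i=1..N. Fi (U i) (c1 i p)) \<le> (\<Sum>i=1..N. Fi (U i) (cn i p))" if "p \<in> grid N0" for p
      using RP(2)[OF cnp[OF that] tau] s1 that by blast
    have c2p: "\<forall>p\<in>grid N0. \<forall>i\<in>{1..N}. c2 i p > 0"
      using diff_props(1)[OF N0 dt] Dpos c1p s2 by blast
    have e2: "(\<Sum>p\<in>grid N0. Fi (U i) (c2 i p)) \<le> (\<Sum>p\<in>grid N0. Fi (U i) (c1 i p))" if "i \<in> {1..N}" for i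
      using diff_props(2)[OF N0 dt] Dpos c1p s2 that by blast
    have c3p: "\<forall>p\<in>grid N0. \<forall>i\<in>{1..N}. cn1 i p > 0"
    proof
      fix p assume p: "p \<in> grid N0"
      have a: "\<forall>i\<in>{1..N}. c2 i p > 0" using c2p p by blast
      show "\<forall>i\<in>{1..N}. cn1 i p > 0" using RP(1)[OF a tau] s3 p by blast
    qed
    have e3: "(\<Sum>i=1..N. Fi (U i) (cn1 i p)) \<le> (\<Sum>i=1..N. Fi (U i) (c2 i p))" if p: "p \<in> grid N0" for p
    proof -
      have a: "\<forall>i\<in>{1..N}. c2 i p > 0" using c2p p by blast
      show ?thesis using RP(2)[OF a tau] s3 p by blast
    qed
    have "En N N0 U cn1 \<le> (\<Sum>p\<in>grid N0. \<Sum>i=1..N. Fi (U i) (c2 i p))"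
      unfolding En_def by (intro sum_mono e3)
    also have "\<dots> = (\<Sum>i=1..N. \<Sum>p\<in>grid N0. Fi (U i) (c2 i p))" by (rule sum.swap)
    also have "\<dots> \<le> (\<Sum>i=1..N. \<Sum>p\<in>grid N0. Fi (U i) (c1 i p))" by (intro sum_mono e2)
    also have "\<dots> = (\<Sum>p\<in>grid N0. \<Sum>i=1..N. Fi (U i) (c1 i p))" by (rule sum.swap)
    also have "\<dots> \<le> En N N0 U cn" unfolding En_def by (intro sum_mono e1)
    finally show ?thesis using c3p c1p c2p s1 s2 s3 unfolding positive_state_def by blast
  qed
  define c1 where "c1 = (\<lambda>i p. (SOME f. reaction_step N r \<alpha> \<beta> U k1m \<tau> (\<lambda>i. cn i p) f) i)"
  have s1: "reaction_step N r \<alpha> \<beta> U k1m \<tau> (\<lambda>i. cn i p) (\<lambda>i. c1 i p)" if "p \<in> grid N0" for p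
    unfolding c1_def using someI_ex[OF RE[OF cnp[OF that] tau]] by simp
  have c1p: "\<forall>i\<in>{1..N}. c1 i p > 0" if "p \<in> grid N0" for p
    using RP(1)[OF cnp[OF that] tau s1[OF that]] .
  define c2 where "c2 = (\<lambda>i. SOME \<rho>. diffusion_step N0 (D i) (U i) \<Delta>t (c1 i) \<rho>)"
  have s2: "diffusion_step N0 (D i) (U i) \<Delta>t (c1 i) (c2 i)" if "i \<in> {1..N}" for i
  proof -
    have "\<exists>\<rho>. diffusion_step N0 (D i) (U i) \<Delta>t (c1 i) \<rho>"
      by (rule diff_exists[OF N0 dt]) (use Dpos c1p that in auto)
    then show ?thesis unfolding c2_def by (rule someI_ex)
  qed
  have c2p: "\<forall>i\<in>{1..N}. c2 i p > 0" if "p \<in> grid N0" for p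
    using diff_props(1)[OF N0 dt] Dpos c1p s2 that by blast
  define c3 where "c3 = (\<lambda>p. SOME f. reaction_step N r \<alpha> \<beta> U k1m \<tau> (\<lambda>i. c2 i p) f)"
  have s3: "reaction_step N r \<alpha> \<beta> U k1m \<tau> (\<lambda>i. c2 i p) (c3 p)" if "p \<in> grid N0" for p
    unfolding c3_def using someI_ex[OF RE[OF c2p[OF that] tau]] .
  define cn1 where "cn1 = (\<lambda>i p. if i \<in> {1..N} \<and> p \<in> grid N0 then c3 p i else 0)"
  have ex: "splitting_step N r \<alpha> \<beta> U k1m D N0 \<Delta>t cn cn1"
    unfolding splitting_step_def
  proof (intro conjI exI)
    show "supported N N0 cn1" by (auto simp: supported_def cn1_def)
    show "\<forall>p\<in>grid N0. reaction_step N r \<alpha> \<beta> U k1m (\<Delta>t / 2) (\<lambda>i. cn i p) (\<lambda>i. c1 i p)"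
      using s1 by (simp add: \<tau>_def)
    show "\<forall>i\<in>{1..N}. diffusion_step N0 (D i) (U i) \<Delta>t (c1 i) (c2 i)" using s2 by blast
    show "\<forall>p\<in>grid N0. reaction_step N r \<alpha> \<beta> U k1m (\<Delta>t / 2) (\<lambda>i. c2 i p) (\<lambda>i. cn1 i p)"
      using s3 react_out_cong by (fastforce simp: cn1_def \<tau>_def)
  qed
  have un: "a = b" if sa: "splitting_step N r \<alpha> \<beta> U k1m D N0 \<Delta>t cn a"
    and sb: "splitting_step N r \<alpha> \<beta> U k1m D N0 \<Delta>t cn b" for a b
  proof -
    obtain a1 a2 where a1p: "\<forall>p\<in>grid N0. \<forall>i\<in>{1..N}. a1 i p > 0" and a2p: "\<forall>p\<in>grid N0. \<forall>i\<in>{1..N}. a2 i p > 0"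
      and as1: "\<forall>p\<in>grid N0. reaction_step N r \<alpha> \<beta> U k1m \<tau> (\<lambda>i. cn i p) (\<lambda>i. a1 i p)"
      and as2: "\<forall>i\<in>{1..N}. diffusion_step N0 (D i) (U i) \<Delta>t (a1 i) (a2 i)"
      and as3: "\<forall>p\<in>grid N0. reaction_step N r \<alpha> \<beta> U k1m \<tau> (\<lambda>i. a2 i p) (\<lambda>i. a i p)"
      using props[OF sa] by blast
    obtain b1 b2 where b1p: "\<forall>p\<in>grid N0. \<forall>i\<in>{1..N}. b1 i p > 0"
      and bs1: "\<forall>p\<in>grid N0. reaction_step N r \<alpha> \<beta> U k1m \<tau> (\<lambda>i. cn i p) (\<lambda>i. b1 i p)"
      and bs2: "\<forall>i\<in>{1..N}. diffusion_step N0 (D i) (U i) \<Delta>t (b1 i) (b2 i)"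
      and bs3: "\<forall>p\<in>grid N0. reaction_step N r \<alpha> \<beta> U k1m \<tau> (\<lambda>i. b2 i p) (\<lambda>i. b i p)"
      using props[OF sb] by blast
    have e1: "\<forall>p\<in>grid N0. \<forall>i\<in>{1..N}. a1 i p = b1 i p"
      using RU[OF cnp tau] as1 bs1 by blast
    have e2: "\<forall>i\<in>{1..N}. \<forall>p\<in>grid N0. a2 i p = b2 i p"
    proof (intro ballI)
      fix i p assume i: "i \<in> {1..N}" and p: "p \<in> grid N0"
      have "\<forall>p\<in>grid N0. a2 i p = b2 i p"
        by (rule diff_unique[OF dt, where Di="D i" and \<rho>n="a1 i" and \<rho>n'="b1 i" and Ui="U i"])
           (use Dpos i a1p e1 as2 bs2 in auto)
      then show "a2 i p = b2 i p" using p by blast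
    qed
    show "a = b"
    proof (intro ext)
      fix i p
      show "a i p = b i p"
      proof (cases "i \<in> {1..N} \<and> p \<in> grid N0")
        case True
        then have p: "p \<in> grid N0" and i: "i \<in> {1..N}" by auto
        have "reaction_step N r \<alpha> \<beta> U k1m \<tau> (\<lambda>i. a2 i p) (\<lambda>i. b i p)"
          using RC[of "\<lambda>i. b2 i p" "\<lambda>i. a2 i p"] bs3 p e2 by auto
        then have "\<forall>i\<in>{1..N}. a i p = b i p"
          using RU[OF _ tau, of "\<lambda>i. a2 i p"] a2p as3 p by blast
        then show ?thesis using i by blast
      next
        case False
        have "supported N N0 a" "supported N N0 b" using sa sb by (simp_all add: splitting_step_def)
        then have "a i p = 0" "b i p = 0" using False unfolding supported_def by blast+
        then show ?thesis by simp
      qed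
    qed
  qed
  show ?thesis
  proof (intro conjI allI impI)
    show "\<exists>!cn1. splitting_step N r \<alpha> \<beta> U k1m D N0 \<Delta>t cn cn1" using ex un by blast
  next
    fix cn1 assume "splitting_step N r \<alpha> \<beta> U k1m D N0 \<Delta>t cn cn1"
    then show "positive_state N N0 cn1" using props by blast
  next
    fix cn1 assume "splitting_step N r \<alpha> \<beta> U k1m D N0 \<Delta>t cn cn1"
    then show "energy_h N N0 U cn1 \<le> energy_h N N0 U cn" using props energy_mono by blast
  qed
qed

theorem theorem3p7:
  fixes N r N0 :: nat and \<alpha> \<beta> U :: "nat \<Rightarrow> real" and k1m \<Delta>t :: real
    and D :: "nat \<Rightarrow> real \<Rightarrow> real"
  assumes "1 \<le> r" and "r < N"
    and "\<forall>i\<in>{1..r}. \<alpha> i > 0" and "\<forall>i\<in>{r+1..N}. \<beta> i > 0"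
    and "k1m > 0" and "\<Delta>t > 0" and "N0 \<ge> 1"
    and "\<forall>i\<in>{1..N}. \<forall>\<rho>>0. D i \<rho> > 0"
  shows "(\<forall>cn. positive_state N N0 cn \<longrightarrow>
            (\<exists>!cn1. splitting_step N r \<alpha> \<beta> U k1m D N0 \<Delta>t cn cn1) \<and>
            (\<forall>cn1. splitting_step N r \<alpha> \<beta> U k1m D N0 \<Delta>t cn cn1 \<longrightarrow>
                positive_state N N0 cn1 \<and> energy_h N N0 U cn1 \<le> energy_h N N0 U cn)) \<and>
         (\<forall>c :: nat \<Rightarrow> nat \<Rightarrow> gpt \<Rightarrow> real.
            positive_state N N0 (c 0) \<and>
            (\<forall>n. splitting_step N r \<alpha> \<beta> U k1m D N0 \<Delta>t (c n) (c (Suc n))) \<longrightarrow>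
            (\<forall>n. energy_h N N0 U (c n) \<le> energy_h N N0 U (c 0)))"
proof (rule conjI; intro allI impI)
  fix cn assume "positive_state N N0 cn"
  show "(\<exists>!cn1. splitting_step N r \<alpha> \<beta> U k1m D N0 \<Delta>t cn cn1) \<and>
            (\<forall>cn1. splitting_step N r \<alpha> \<beta> U k1m D N0 \<Delta>t cn cn1 \<longrightarrow>
                positive_state N N0 cn1 \<and> energy_h N N0 U cn1 \<le> energy_h N N0 U cn)"
    by (rule step_main[OF assms \<open>positive_state N N0 cn\<close>])
next
  fix c :: "nat \<Rightarrow> nat \<Rightarrow> gpt \<Rightarrow> real" and n
  assume h: "positive_state N N0 (c 0) \<and> (\<forall>n. splitting_step N r \<alpha> \<beta> U k1m D N0 \<Delta>t (c n) (c (Suc n)))"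
  have "positive_state N N0 (c n) \<and> energy_h N N0 U (c n) \<le> energy_h N N0 U (c 0)"
  proof (induction n)
    case 0 then show ?case using h by simp
  next
    case (Suc n)
    then have "positive_state N N0 (c (Suc n)) \<and> energy_h N N0 U (c (Suc n)) \<le> energy_h N N0 U (c n)"
      using step_main[OF assms, of "c n"] h by blast
    then show ?case using Suc by linarith
  qed
  then show "energy_h N N0 U (c n) \<le> energy_h N N0 U (c 0)" by blast
qed



end
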